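(* Let $V=\mathbb R^{p,q}$ with $p\equiv3\pmod4$, take $p'=p$, $p''=0$, and let $\hat K=\hat K(p,0)\subset\mathrm{Spin}(p,q)$. A $C\ell^0_{p,q}$-module $W$ is irreducible if and only if it is irreducible as a $\hat K$-module. In this case the space of $\hat K$-invariant symmetric bilinear forms on $W$ is one-dimensional and is spanned by a positive definite scalar product. Moreover, if $W$ is an irreducible $C\ell^0_{p,q}$-module and $\Pi:\wedge^2W\to V$ is any $\mathfrak o(V)$-equivariant linear map, then either $\Pi=0$ or $b(\Pi)$ is a (positive or negative) definite $\hat K$-invariant symmetric bilinear form on $W$.
   Context: Let $V=\mathbb{R}^{p,q}$ be $\mathbb R^{p+q}$ with the scalar product $\langle x,y\rangle=\sum_{i=1}^{p}x^iy^i-\sum_{j=p+1}^{p+q}x^jy^j$ and its standard orthonormal basis $e_1,\dots,e_{p+q}$. $C\ell_{p,q}$ is generated by $V$ subject to $xy+yx=-2\langle x,y\rangle 1$, with even part $C\ell^0_{p,q}$; $\mathrm{Pin}$ is generated by unit vectors, $\mathrm{Spin}=\mathrm{Pin}\cap C\ell^0$. Identify $\mathfrak{o}(V)=\wedge^2V$ via $(x\wedge y)(z)=\langle y,z\rangle x-\langle x,z\rangle y$; $x\wedge y\mapsto-\frac14(xy-yx)$ identifies $\mathfrak o(V)$ with $\mathfrak{spin}(V)$, through which $\mathfrak o(V)$ acts on $C\ell^0(V)$-modules. $b(\Pi)(s,t)=\langle e_1,\Pi(e_2\cdots e_p s\wedge t)\rangle$. $\hat K(p,0)=\mathrm{Spin}(p)\cdot\iota(\mathrm{Pin}(q))$,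 where $\mathrm{Spin}(p)$ is the spin group of the span of $e_1,\dots,e_p$ and $\iota:C\ell(\mathbb R^{q,0})\to C\ell^0_{p,q}$ is the algebra embedding extending $x\mapsto e_1\cdots e_p\,x'$, with $x\mapsto x'$ sending the $k$-th standard basis vector of $\mathbb R^q$ to $e_{p+k}$. *)

theory Defs
  imports "HOL-Analysis.Analysis"
begin

text \<open>Vectors of R^{p,q} are functions nat => real vanishing at indices >= p+q.
  The paper's e_1,...,e_{p+q} are our e_0,...,e_{p+q-1}.\<close>

definition Vspace :: "nat \<Rightarrow> (nat \<Rightarrow> real) set" where
  "Vspace n = {v. \<forall>i\<ge>n. v i = 0}"

definition std_basis :: "nat \<Rightarrow> nat \<Rightarrow> real" where
  "std_basis k = (\<lambda>i. if i = k then 1 else 0)"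

definition pq_inner :: "nat \<Rightarrow> nat \<Rightarrow> (nat \<Rightarrow> real) \<Rightarrow> (nat \<Rightarrow> real) \<Rightarrow> real" where
  "pq_inner p q x y = (\<Sum>i<p. x i * y i) - (\<Sum>i\<in>{p..<p+q}. x i * y i)"

section \<open>The Clifford algebra Cl_{p,q} (relation xy+yx = -2<x,y>)\<close>

text \<open>An element of Cl_{p,q} is given by its coefficients on the basis blades
  e_A = e_{a1} ... e_{ak} (a1 < ... < ak, A = {a1,...,ak} \<subseteq> {0..<p+q}).\<close>

type_synonym mv = "nat set \<Rightarrow> real"

text \<open>e_i^2 = -<e_i,e_i>\<close>
definition cl_sq :: "nat \<Rightarrow> nat \<Rightarrow> real" where
  "cl_sq p i = (if i < p then -1 else 1)"

definition blade_sign :: "nat \<Rightarrow> nat set \<Rightarrow> nat set \<Rightarrow> real" where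
  "blade_sign p A B =
     (-1) ^ card {(a, b). a \<in> A \<and> b \<in> B \<and> b < a} * (\<Prod>i\<in>A \<inter> B. cl_sq p i)"

definition clifford :: "nat \<Rightarrow> nat \<Rightarrow> mv set" where
  "clifford p q = {x. \<forall>A. x A \<noteq> 0 \<longrightarrow> A \<subseteq> {0..<p+q}}"

definition cl_even :: "nat \<Rightarrow> nat \<Rightarrow> mv set" where
  "cl_even p q = {x. \<forall>A. x A \<noteq> 0 \<longrightarrow> A \<subseteq> {0..<p+q} \<and> even (card A)}"

definition cl_mult :: "nat \<Rightarrow> nat \<Rightarrow> mv \<Rightarrow> mv \<Rightarrow> mv" where
  "cl_mult p q x y = (\<lambda>C. \<Sum>A\<in>Pow {0..<p+q}. \<Sum>B\<in>Pow {0..<p+q}.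
       if (A - B) \<union> (B - A) = C then blade_sign p A B * x A * y B else 0)"

definition cl_one :: mv where
  "cl_one = (\<lambda>A. if A = {} then 1 else 0)"

definition cl_blade :: "nat set \<Rightarrow> mv" where
  "cl_blade S = (\<lambda>A. if A = S then 1 else 0)"

definition cl_vec :: "(nat \<Rightarrow> real) \<Rightarrow> mv" where
  "cl_vec v = (\<lambda>A. if card A = 1 then v (the_elem A) else 0)"

definition cl_prod :: "nat \<Rightarrow> nat \<Rightarrow> mv list \<Rightarrow> mv" where
  "cl_prod p q xs = foldr (cl_mult p q) xs cl_one"

text \<open>Pin of a subspace S of R^{p,q}: generated by the unit vectors of S
  (products of finite lists of unit vectors; this is already a group since the
  inverse of a unit vector is, up to sign, itself).\<close>
definition unit_vecs :: "nat \<Rightarrow> nat \<Rightarrow> (nat \<Rightarrow> real) set \<Rightarrow> (nat \<Rightarrow> real) set" where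
  "unit_vecs p q S = {v \<in> S. pq_inner p q v v = 1 \<or> pq_inner p q v v = -1}"

definition pin_group :: "nat \<Rightarrow> nat \<Rightarrow> (nat \<Rightarrow> real) set \<Rightarrow> mv set" where
  "pin_group p q S = {cl_prod p q (map cl_vec vs) | vs. set vs \<subseteq> unit_vecs p q S}"

definition spin_group :: "nat \<Rightarrow> nat \<Rightarrow> (nat \<Rightarrow> real) set \<Rightarrow> mv set" where
  "spin_group p q S = pin_group p q S \<inter> cl_even p q"

text \<open>The algebra embedding iota : Cl(R^{q,0}) -> Cl^0_{p,q} extending
  x |-> e_1...e_p x'; on blades iota(e_A) = prod_{k in A, increasing} (e_1...e_p e_{p+k}).\<close>
definition iota_blade :: "nat \<Rightarrow> nat \<Rightarrow> nat set \<Rightarrow> mv" where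
  "iota_blade p q A = cl_prod p q
     (map (\<lambda>k. cl_mult p q (cl_blade {0..<p}) (cl_vec (std_basis (p + k)))) (sorted_list_of_set A))"

definition iota :: "nat \<Rightarrow> nat \<Rightarrow> mv \<Rightarrow> mv" where
  "iota p q x = (\<lambda>C. \<Sum>A\<in>Pow {0..<q}. x A * iota_blade p q A C)"

definition Khat :: "nat \<Rightarrow> nat \<Rightarrow> mv set" where
  "Khat p q = {cl_mult p q s (iota p q g) | s g.
      s \<in> spin_group p q (Vspace p) \<and> g \<in> pin_group q 0 (Vspace q)}"

definition cl0_module :: "nat \<Rightarrow> nat \<Rightarrow> (mv \<Rightarrow> 'w::real_vector \<Rightarrow> 'w) \<Rightarrow> bool" where
  "cl0_module p q \<rho> \<longleftrightarrow>
     \<rho> cl_one = id \<and>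
     (\<forall>x\<in>cl_even p q. linear (\<rho> x)) \<and>
     (\<forall>x\<in>cl_even p q. \<forall>y\<in>cl_even p q. \<rho> (\<lambda>A. x A + y A) = (\<lambda>w. \<rho> x w + \<rho> y w)) \<and>
     (\<forall>x\<in>cl_even p q. \<forall>c. \<rho> (\<lambda>A. c * x A) = (\<lambda>w. c *\<^sub>R \<rho> x w)) \<and>
     (\<forall>x\<in>cl_even p q. \<forall>y\<in>cl_even p q. \<rho> (cl_mult p q x y) = \<rho> x \<circ> \<rho> y)"

text \<open>W (= UNIV) is irreducible under the action of the elements of X via \<rho>.\<close>
definition irreducible_under :: "mv set \<Rightarrow> (mv \<Rightarrow> 'w::real_vector \<Rightarrow> 'w) \<Rightarrow> bool" where
  "irreducible_under X \<rho> \<longleftrightarrow>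
     (\<exists>w::'w. w \<noteq> 0) \<and>
     (\<forall>U::'w set. subspace U \<and> (\<forall>x\<in>X. \<forall>u\<in>U. \<rho> x u \<in> U) \<longrightarrow> U = {0} \<or> U = UNIV)"

definition bilinear_form :: "('w::real_vector \<Rightarrow> 'w \<Rightarrow> real) \<Rightarrow> bool" where
  "bilinear_form \<beta> \<longleftrightarrow> (\<forall>s. linear (\<beta> s)) \<and> (\<forall>t. linear (\<lambda>s. \<beta> s t))"

definition sym_form :: "('w \<Rightarrow> 'w \<Rightarrow> real) \<Rightarrow> bool" where
  "sym_form \<beta> \<longleftrightarrow> (\<forall>s t. \<beta> s t = \<beta> t s)"

definition invariant_form :: "mv set \<Rightarrow> (mv \<Rightarrow> 'w \<Rightarrow> 'w) \<Rightarrow> ('w \<Rightarrow> 'w \<Rightarrow> real) \<Rightarrow> bool" where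
  "invariant_form X \<rho> \<beta> \<longleftrightarrow> (\<forall>k\<in>X. \<forall>s t. \<beta> (\<rho> k s) (\<rho> k t) = \<beta> s t)"

definition pos_def :: "('w::real_vector \<Rightarrow> 'w \<Rightarrow> real) \<Rightarrow> bool" where
  "pos_def \<beta> \<longleftrightarrow> (\<forall>s. s \<noteq> 0 \<longrightarrow> \<beta> s s > 0)"

definition neg_def :: "('w::real_vector \<Rightarrow> 'w \<Rightarrow> real) \<Rightarrow> bool" where
  "neg_def \<beta> \<longleftrightarrow> (\<forall>s. s \<noteq> 0 \<longrightarrow> \<beta> s s < 0)"

text \<open>A linear map \<wedge>^2 W -> V is represented (universal property) by an
  alternating bilinear map W x W -> V; V-valued maps are given componentwise.\<close>
definition wedge2_map :: "nat \<Rightarrow> nat \<Rightarrow> ('w::real_vector \<Rightarrow> 'w \<Rightarrow> nat \<Rightarrow> real) \<Rightarrow> bool" where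
  "wedge2_map p q Pm \<longleftrightarrow>
     (\<forall>s t. Pm s t \<in> Vspace (p + q)) \<and>
     (\<forall>i s. linear (\<lambda>t. Pm s t i)) \<and> (\<forall>i t. linear (\<lambda>s. Pm s t i)) \<and>
     (\<forall>s t. Pm s t = (\<lambda>i. - Pm t s i))"

definition so_act_V :: "nat \<Rightarrow> nat \<Rightarrow> (nat \<Rightarrow> real) \<Rightarrow> (nat \<Rightarrow> real) \<Rightarrow> (nat \<Rightarrow> real) \<Rightarrow> (nat \<Rightarrow> real)" where
  "so_act_V p q x y z = (\<lambda>i. pq_inner p q y z * x i - pq_inner p q x z * y i)"

definition so_act_W :: "nat \<Rightarrow> nat \<Rightarrow> (mv \<Rightarrow> 'w \<Rightarrow> 'w) \<Rightarrow> (nat \<Rightarrow> real) \<Rightarrow> (nat \<Rightarrow> real) \<Rightarrow> 'w \<Rightarrow> 'w" where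
  "so_act_W p q \<rho> x y = \<rho> (\<lambda>A. -(1/4) *
       (cl_mult p q (cl_vec x) (cl_vec y) A - cl_mult p q (cl_vec y) (cl_vec x) A))"

text \<open>o(V)-equivariance (o(V) = \<wedge>^2 V is spanned by the x\<wedge>y, x,y \<in> V; the action
  on \<wedge>^2 W is A(s\<wedge>t) = As\<wedge>t + s\<wedge>At).\<close>
definition so_equivariant :: "nat \<Rightarrow> nat \<Rightarrow> (mv \<Rightarrow> 'w::real_vector \<Rightarrow> 'w) \<Rightarrow> ('w \<Rightarrow> 'w \<Rightarrow> nat \<Rightarrow> real) \<Rightarrow> bool" where
  "so_equivariant p q \<rho> Pm \<longleftrightarrow>
     (\<forall>x\<in>Vspace (p+q). \<forall>y\<in>Vspace (p+q). \<forall>s t.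
        (\<lambda>i. Pm (so_act_W p q \<rho> x y s) t i + Pm s (so_act_W p q \<rho> x y t) i)
        = so_act_V p q x y (Pm s t))"

text \<open>b(\<Pi>)(s,t) = <e_1, \<Pi>(e_2...e_p s \<wedge> t)>\<close>
definition b_form :: "nat \<Rightarrow> nat \<Rightarrow> (mv \<Rightarrow> 'w \<Rightarrow> 'w) \<Rightarrow> ('w \<Rightarrow> 'w \<Rightarrow> nat \<Rightarrow> real) \<Rightarrow> 'w \<Rightarrow> 'w \<Rightarrow> real" where
  "b_form p q \<rho> Pm s t = pq_inner p q (std_basis 0) (Pm (\<rho> (cl_blade {1..<p}) s) t)"

end

theory Submission
  imports Defs "HOL-Computational_Algebra.Fundamental_Theorem_Algebra"
begin

abbreviation sd :: "'a set \<Rightarrow> 'a set \<Rightarrow> 'a set" where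
  "sd A B \<equiv> (A - B) \<union> (B - A)"

definition chi :: "nat \<Rightarrow> nat \<Rightarrow> real" where
  "chi a b = (if b < a then -1 else 1)"

definition invs :: "nat set \<Rightarrow> nat set \<Rightarrow> real" where
  "invs A B = (\<Prod>a\<in>A. \<Prod>b\<in>B. chi a b)"

definition Qs :: "nat \<Rightarrow> nat set \<Rightarrow> real" where
  "Qs p A = (\<Prod>i\<in>A. cl_sq p i)"

lemma pm1_card:
  assumes "finite S"
  shows "(\<Prod>x\<in>S. if P x then -1 else (1::real)) = (-1) ^ card {x\<in>S. P x}"
proof -
  have "(\<Prod>x\<in>S. if P x then -1 else (1::real)) = (\<Prod>x\<in>{x\<in>S. P x}. -1)"
    using assms by (simp add: prod.If_cases Int_def conj_commute)
  also have "\<dots> = (-1) ^ card {x\<in>S. P x}" by simp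
  finally show ?thesis .
qed

lemma blade_sign_eq:
  assumes "finite A" "finite B"
  shows "blade_sign p A B = invs A B * Qs p (A \<inter> B)"
proof -
  have "invs A B = (\<Prod>z\<in>A \<times> B. chi (fst z) (snd z))"
    unfolding invs_def by (simp add: prod.cartesian_product split_def)
  also have "\<dots> = (\<Prod>z\<in>A \<times> B. if snd z < fst z then -1 else 1)"
    unfolding chi_def by simp
  also have "\<dots> = (-1) ^ card {z\<in>A\<times>B. snd z < fst z}"
    using assms by (intro pm1_card) auto
  also have "{z\<in>A\<times>B. snd z < fst z} = {(a, b). a \<in> A \<and> b \<in> B \<and> b < a}" by auto
  finally show ?thesis unfolding blade_sign_def Qs_def by simp
qed

lemma prod_sq1:
  assumes "\<And>x. f x * f x = (1::real)"
  shows "prod f A * prod f A = 1"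
  by (simp add: prod.distrib[symmetric] assms)

lemma prod_symdiff:
  assumes "finite A" "finite B" "\<And>x. f x * f x = (1::real)"
  shows "prod f (sd A B) = prod f A * prod f B"
proof -
  have a: "prod f A = prod f (A - B) * prod f (A \<inter> B)"
  proof -
    have "prod f A = prod f (A - (A \<inter> B)) * prod f (A \<inter> B)"
      using assms(1) by (intro prod.subset_diff) auto
    moreover have "A - (A \<inter> B) = A - B" by auto
    ultimately show ?thesis by simp
  qed
  have b: "prod f B = prod f (B - A) * prod f (A \<inter> B)"
  proof -
    have "prod f B = prod f (B - (A \<inter> B)) * prod f (A \<inter> B)"
      using assms(2) by (intro prod.subset_diff) auto
    moreover have "B - (A \<inter> B) = B - A" by auto
    ultimately show ?thesis by simp
  qed
  have c: "prod f (sd A B) = prod f (A - B) * prod f (B - A)"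
    using assms by (intro prod.union_disjoint) auto
  have d: "prod f (A \<inter> B) * prod f (A \<inter> B) = 1" using prod_sq1 assms(3) by blast
  show ?thesis unfolding a b c
  proof -
    have "prod f (A - B) * prod f (A \<inter> B) * (prod f (B - A) * prod f (A \<inter> B))
        = prod f (A - B) * prod f (B - A) * (prod f (A \<inter> B) * prod f (A \<inter> B))"
      by (simp only: ac_simps)
    then show "prod f (A - B) * prod f (B - A) = prod f (A - B) * prod f (A \<inter> B) * (prod f (B - A) * prod f (A \<inter> B))"
      using d by simp
  qed
qed

lemma chi_sq: "chi a b * chi a b = 1" by (simp add: chi_def)
lemma cl_sq_sq: "cl_sq p i * cl_sq p i = 1" by (simp add: cl_sq_def)

lemma invs_sq: "invs A B * invs A B = 1"
  unfolding invs_def by (intro prod_sq1 prod_sq1 chi_sq)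

lemma Qs_sq: "Qs p A * Qs p A = 1"
  unfolding Qs_def by (intro prod_sq1 cl_sq_sq)

lemma invs_sd_left:
  assumes "finite A" "finite B"
  shows "invs (sd A B) C = invs A C * invs B C"
  unfolding invs_def using assms by (intro prod_symdiff prod_sq1 chi_sq)

lemma invs_sd_right:
  assumes "finite B" "finite C"
  shows "invs A (sd B C) = invs A B * invs A C"
  unfolding invs_def using assms
  by (simp add: prod_symdiff chi_sq prod.distrib)

lemma Qs_sd:
  assumes "finite A" "finite B"
  shows "Qs p (sd A B) = Qs p A * Qs p B"
  unfolding Qs_def using assms by (intro prod_symdiff cl_sq_sq)

lemma blade_sign_sq:
  assumes "finite A" "finite B"
  shows "blade_sign p A B * blade_sign p A B = 1"
proof -
  have "invs A B * Qs p (A \<inter> B) * (invs A B * Qs p (A \<inter> B)) = (invs A B * invs A B) * (Qs p (A \<inter> B) * Qs p (A \<inter> B))"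
    by (simp only: ac_simps)
  then show ?thesis using assms by (simp add: blade_sign_eq invs_sq Qs_sq)
qed

lemma blade_sign_cocycle:
  assumes "finite A" "finite B" "finite C"
  shows "blade_sign p A B * blade_sign p (sd A B) C = blade_sign p A (sd B C) * blade_sign p B C"
proof -
  have s1: "sd A B \<inter> C = sd (A \<inter> C) (B \<inter> C)" by auto
  have s2: "A \<inter> sd B C = sd (A \<inter> B) (A \<inter> C)" by auto
  have f: "finite (sd A B)" "finite (sd B C)" using assms by auto
  have q1: "Qs p (sd (A \<inter> C) (B \<inter> C)) = Qs p (A \<inter> C) * Qs p (B \<inter> C)"
    using assms by (intro Qs_sd) auto
  have q2: "Qs p (sd (A \<inter> B) (A \<inter> C)) = Qs p (A \<inter> B) * Qs p (A \<inter> C)"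
    using assms by (intro Qs_sd) auto
  have "blade_sign p A B * blade_sign p (sd A B) C =
      (invs A B * Qs p (A \<inter> B)) * ((invs A C * invs B C) * (Qs p (A \<inter> C) * Qs p (B \<inter> C)))"
    unfolding blade_sign_eq[OF assms(1,2)] blade_sign_eq[OF f(1) assms(3)] s1 q1
      invs_sd_left[OF assms(1,2)] ..
  also have "\<dots> = (invs A B * invs A C * (Qs p (A \<inter> B) * Qs p (A \<inter> C))) * (invs B C * Qs p (B \<inter> C))"
    by (simp only: ac_simps)
  also have "\<dots> = blade_sign p A (sd B C) * blade_sign p B C"
    unfolding blade_sign_eq[OF assms(1) f(2)] blade_sign_eq[OF assms(2,3)] s2 q2
      invs_sd_right[OF assms(2,3)] ..
  finally show ?thesis .
qed

lemma sd_sub: "A \<subseteq> S \<Longrightarrow> B \<subseteq> S \<Longrightarrow> sd A B \<subseteq> S" by auto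

lemma cl_mult_supp:
  assumes "cl_mult p q x y C \<noteq> 0" shows "C \<subseteq> {0..<p+q}"
proof (rule ccontr)
  assume "\<not> C \<subseteq> {0..<p+q}"
  then have "\<forall>A\<in>Pow {0..<p+q}. \<forall>B\<in>Pow {0..<p+q}. sd A B \<noteq> C" by auto
  then have "cl_mult p q x y C = 0" unfolding cl_mult_def by (intro sum.neutral) auto
  with assms show False by simp
qed

lemma cl_mult_in_clifford: "cl_mult p q x y \<in> clifford p q"
  unfolding clifford_def using cl_mult_supp by blast

lemma H1: "(if P then a * (\<Sum>i\<in>I. f i) * b else 0) = (\<Sum>i\<in>I. if P then a * f i * b else (0::real))"
  by (cases P) (simp_all add: sum_distrib_left sum_distrib_right)
lemma H2: "(if P then a * x * (\<Sum>i\<in>I. f i) else 0) = (\<Sum>i\<in>I. if P then a * x * f i else (0::real))"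
  by (cases P) (simp_all add: sum_distrib_left sum_distrib_right)
lemma sum4_perm: "(\<Sum>C\<in>S. \<Sum>E\<in>S. \<Sum>A\<in>S. \<Sum>B\<in>S. f C E A B) = (\<Sum>A\<in>S. \<Sum>B\<in>S. \<Sum>E\<in>S. \<Sum>C\<in>S. f C E A (B::'a) :: real)"
proof -
  have 1: "(\<Sum>C\<in>S. \<Sum>E\<in>S. \<Sum>A\<in>S. \<Sum>B\<in>S. f C E A B) = (\<Sum>C\<in>S. \<Sum>A\<in>S. \<Sum>E\<in>S. \<Sum>B\<in>S. f C E A B)"
    by (rule sum.cong[OF refl], rule sum.swap)
  have 2: "\<dots> = (\<Sum>A\<in>S. \<Sum>C\<in>S. \<Sum>E\<in>S. \<Sum>B\<in>S. f C E A B)" by (rule sum.swap)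
  have 3: "\<dots> = (\<Sum>A\<in>S. \<Sum>C\<in>S. \<Sum>B\<in>S. \<Sum>E\<in>S. f C E A B)"
    by (rule sum.cong[OF refl], rule sum.cong[OF refl], rule sum.swap)
  have 4: "\<dots> = (\<Sum>A\<in>S. \<Sum>B\<in>S. \<Sum>C\<in>S. \<Sum>E\<in>S. f C E A B)"
    by (rule sum.cong[OF refl], rule sum.swap)
  have 5: "\<dots> = (\<Sum>A\<in>S. \<Sum>B\<in>S. \<Sum>E\<in>S. \<Sum>C\<in>S. f C E A B)"
    by (rule sum.cong[OF refl], rule sum.cong[OF refl], rule sum.swap)
  show ?thesis using 1 2 3 4 5 by simp
qed
lemma sum4_perm2: "(\<Sum>A\<in>S. \<Sum>F\<in>S. \<Sum>B\<in>S. \<Sum>E\<in>S. f A F B E) = (\<Sum>A\<in>S. \<Sum>B\<in>S. \<Sum>E\<in>S. \<Sum>F\<in>S. f A F B (E::'a) :: real)"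
proof -
  have 1: "(\<Sum>A\<in>S. \<Sum>F\<in>S. \<Sum>B\<in>S. \<Sum>E\<in>S. f A F B E) = (\<Sum>A\<in>S. \<Sum>B\<in>S. \<Sum>F\<in>S. \<Sum>E\<in>S. f A F B E)"
    by (rule sum.cong[OF refl], rule sum.swap)
  have 2: "\<dots> = (\<Sum>A\<in>S. \<Sum>B\<in>S. \<Sum>E\<in>S. \<Sum>F\<in>S. f A F B E)"
    by (rule sum.cong[OF refl], rule sum.cong[OF refl], rule sum.swap)
  show ?thesis using 1 2 by simp
qed
lemma sum_collapse:
  assumes "finite S"
  shows "(\<Sum>C\<in>S. if c = C then f C else 0) = (if c \<in> S then f c else (0::real))"
  using assms by (simp add: sum.delta)

lemma cl_mult_assoc:
  "cl_mult p q (cl_mult p q x y) z = cl_mult p q x (cl_mult p q y z)"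
proof
  fix D
  let ?P = "Pow {0..<p+q}"
  let ?s = "blade_sign p"
  have fin: "finite ?P" by simp
  have L: "cl_mult p q (cl_mult p q x y) z D =
     (\<Sum>A\<in>?P. \<Sum>B\<in>?P. \<Sum>E\<in>?P. if sd (sd A B) E = D then ?s (sd A B) E * ?s A B * x A * y B * z E else 0)"
  proof -
    have "cl_mult p q (cl_mult p q x y) z D =
      (\<Sum>C\<in>?P. \<Sum>E\<in>?P. \<Sum>A\<in>?P. \<Sum>B\<in>?P. if sd C E = D then ?s C E * (if sd A B = C then ?s A B * x A * y B else 0) * z E else 0)"
      unfolding cl_mult_def by (simp only: H1)
    also have "\<dots> = (\<Sum>A\<in>?P. \<Sum>B\<in>?P. \<Sum>E\<in>?P. \<Sum>C\<in>?P. if sd C E = D then ?s C E * (if sd A B = C then ?s A B * x A * y B else 0) * z E else 0)"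
      by (rule sum4_perm)
    also have "\<dots> = (\<Sum>A\<in>?P. \<Sum>B\<in>?P. \<Sum>E\<in>?P. \<Sum>C\<in>?P. if sd A B = C then (if sd (sd A B) E = D then ?s (sd A B) E * ?s A B * x A * y B * z E else 0) else 0)"
      by (intro sum.cong refl) auto
    also have "\<dots> = (\<Sum>A\<in>?P. \<Sum>B\<in>?P. \<Sum>E\<in>?P. if sd (sd A B) E = D then ?s (sd A B) E * ?s A B * x A * y B * z E else 0)"
      by (intro sum.cong refl, subst sum_collapse[OF fin]) auto
    finally show ?thesis .
  qed
  have R: "cl_mult p q x (cl_mult p q y z) D =
     (\<Sum>A\<in>?P. \<Sum>B\<in>?P. \<Sum>E\<in>?P. if sd A (sd B E) = D then ?s A (sd B E) * ?s B E * x A * y B * z E else 0)"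
  proof -
    have "cl_mult p q x (cl_mult p q y z) D =
      (\<Sum>A\<in>?P. \<Sum>F\<in>?P. \<Sum>B\<in>?P. \<Sum>E\<in>?P. if sd A F = D then ?s A F * x A * (if sd B E = F then ?s B E * y B * z E else 0) else 0)"
      unfolding cl_mult_def by (simp only: H2)
    also have "\<dots> = (\<Sum>A\<in>?P. \<Sum>B\<in>?P. \<Sum>E\<in>?P. \<Sum>F\<in>?P. if sd A F = D then ?s A F * x A * (if sd B E = F then ?s B E * y B * z E else 0) else 0)"
      by (rule sum4_perm2)
    also have "\<dots> = (\<Sum>A\<in>?P. \<Sum>B\<in>?P. \<Sum>E\<in>?P. \<Sum>F\<in>?P. if sd B E = F then (if sd A (sd B E) = D then ?s A (sd B E) * ?s B E * x A * y B * z E else 0) else 0)"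
      by (intro sum.cong refl) auto
    also have "\<dots> = (\<Sum>A\<in>?P. \<Sum>B\<in>?P. \<Sum>E\<in>?P. if sd A (sd B E) = D then ?s A (sd B E) * ?s B E * x A * y B * z E else 0)"
      by (intro sum.cong refl, subst sum_collapse[OF fin]) auto
    finally show ?thesis .
  qed
  have T: "(if sd (sd A B) E = D then ?s (sd A B) E * ?s A B * x A * y B * z E else 0) =
     (if sd A (sd B E) = D then ?s A (sd B E) * ?s B E * x A * y B * z E else 0)"
    if h: "A \<in> ?P" "B \<in> ?P" "E \<in> ?P" for A B E
  proof -
    have f: "finite A" "finite B" "finite E" using h by (auto intro: finite_subset)
    have e: "sd (sd A B) E = sd A (sd B E)" by auto
    have "?s (sd A B) E * ?s A B = ?s A (sd B E) * ?s B E"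
      using blade_sign_cocycle[OF f, of p] by (simp add: mult.commute)
    then show ?thesis unfolding e by simp
  qed
  show "cl_mult p q (cl_mult p q x y) z D = cl_mult p q x (cl_mult p q y z) D"
    unfolding L R by (intro sum.cong refl T)
qed

lemma sum_single:
  assumes "finite S" "b \<in> S" "\<And>x. x \<in> S \<Longrightarrow> x \<noteq> b \<Longrightarrow> f x = 0"
  shows "sum f S = (f b :: real)"
proof -
  have "sum f S = f b + sum f (S - {b})" using assms by (simp add: sum.remove)
  also have "sum f (S - {b}) = 0" using assms by (intro sum.neutral) auto
  finally show ?thesis by simp
qed

lemma cl_blade_mult:
  assumes "A \<subseteq> {0..<p+q}" "B \<subseteq> {0..<p+q}"
  shows "cl_mult p q (cl_blade A) (cl_blade B) = (\<lambda>C. blade_sign p A B * cl_blade (sd A B) C)"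
proof
  fix C
  have "cl_mult p q (cl_blade A) (cl_blade B) C =
     (\<Sum>B'\<in>Pow {0..<p+q}. if sd A B' = C then blade_sign p A B' * cl_blade A A * cl_blade B B' else 0)"
    unfolding cl_mult_def using assms
  proof (intro sum_single)
    fix A' assume "A' \<in> Pow {0..<p+q}" "A' \<noteq> A"
    then show "(\<Sum>B'\<in>Pow {0..<p+q}. if sd A' B' = C then blade_sign p A' B' * cl_blade A A' * cl_blade B B' else 0) = 0"
      by (intro sum.neutral) (simp add: cl_blade_def)
  qed auto
  also have "\<dots> = (if sd A B = C then blade_sign p A B * cl_blade A A * cl_blade B B else 0)"
    using assms by (intro sum_single) (auto simp: cl_blade_def)
  also have "\<dots> = blade_sign p A B * cl_blade (sd A B) C"
    by (auto simp: cl_blade_def)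
  finally show "cl_mult p q (cl_blade A) (cl_blade B) C = blade_sign p A B * cl_blade (sd A B) C" .
qed

lemma cl_one_blade: "cl_one = cl_blade {}"
  unfolding cl_one_def cl_blade_def by simp

lemma cl_one_mult:
  assumes "x \<in> clifford p q" shows "cl_mult p q cl_one x = x"
proof
  fix C
  show "cl_mult p q cl_one x C = x C"
  proof (cases "C \<subseteq> {0..<p+q}")
    case True
    have "cl_mult p q cl_one x C = (\<Sum>B\<in>Pow {0..<p+q}. if sd {} B = C then blade_sign p {} B * cl_one {} * x B else 0)"
      unfolding cl_mult_def
    proof (intro sum_single)
      fix A' assume "A' \<in> Pow {0..<p+q}" "A' \<noteq> {}"
      then show "(\<Sum>B\<in>Pow {0..<p+q}. if sd A' B = C then blade_sign p A' B * cl_one A' * x B else 0) = 0"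
        by (intro sum.neutral) (simp add: cl_one_def)
    qed auto
    also have "\<dots> = (if sd {} C = C then blade_sign p {} C * cl_one {} * x C else 0)"
      using True by (intro sum_single) auto
    also have "\<dots> = x C" by (simp add: cl_one_def blade_sign_def)
    finally show ?thesis .
  next
    case False
    have "x C = 0" using assms False by (auto simp: clifford_def)
    moreover have "cl_mult p q cl_one x C = 0" using cl_mult_supp False by blast
    ultimately show ?thesis by simp
  qed
qed

lemma cl_mult_one:
  assumes "x \<in> clifford p q" shows "cl_mult p q x cl_one = x"
proof
  fix C
  show "cl_mult p q x cl_one C = x C"
  proof (cases "C \<subseteq> {0..<p+q}")
    case True
    have "cl_mult p q x cl_one C = (\<Sum>A\<in>Pow {0..<p+q}. if sd A {} = C then blade_sign p A {} * x A * cl_one {} else 0)"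
      unfolding cl_mult_def by (intro sum.cong refl sum_single) (auto simp: cl_one_def)
    also have "\<dots> = (if sd C {} = C then blade_sign p C {} * x C * cl_one {} else 0)"
      using True by (intro sum_single) auto
    also have "\<dots> = x C" by (simp add: cl_one_def blade_sign_def)
    finally show ?thesis .
  next
    case False
    have "x C = 0" using assms False by (auto simp: clifford_def)
    moreover have "cl_mult p q x cl_one C = 0" using cl_mult_supp False by blast
    ultimately show ?thesis by simp
  qed
qed

definition tau :: "nat \<Rightarrow> nat set \<Rightarrow> real" where
  "tau p A = blade_sign p A A"

definition star :: "nat \<Rightarrow> mv \<Rightarrow> mv" where
  "star p x = (\<lambda>A. tau p A * x A)"

lemma tau_eq: "finite A \<Longrightarrow> tau p A = invs A A * Qs p A"
  unfolding tau_def by (simp add: blade_sign_eq)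

lemma tau_sq: "finite A \<Longrightarrow> tau p A * tau p A = 1"
  unfolding tau_def by (rule blade_sign_sq)

lemma tau_sd:
  assumes "finite A" "finite B"
  shows "tau p (sd A B) * blade_sign p A B = tau p A * tau p B * blade_sign p B A"
proof -
  have f: "finite (sd A B)" using assms by auto
  have i: "invs (sd A B) (sd A B) = invs A A * invs A B * (invs B A * invs B B)"
    using assms by (simp add: invs_sd_left invs_sd_right mult.assoc)
  have q: "Qs p (sd A B) = Qs p A * Qs p B" using assms by (rule Qs_sd)
  have "tau p (sd A B) * blade_sign p A B =
      (invs A A * Qs p A) * (invs B B * Qs p B) * (invs B A * Qs p (B \<inter> A)) * (invs A B * invs A B)"
    unfolding tau_eq[OF f] i q blade_sign_eq[OF assms] by (simp only: ac_simps Int_commute)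
  also have "\<dots> = tau p A * tau p B * blade_sign p B A"
    using assms by (simp add: invs_sq tau_eq blade_sign_eq)
  finally show ?thesis .
qed

lemma star_mult: "star p (cl_mult p q x y) = cl_mult p q (star p y) (star p x)"
proof
  fix C
  let ?P = "Pow {0..<p+q}"
  have "star p (cl_mult p q x y) C = (\<Sum>A\<in>?P. \<Sum>B\<in>?P. tau p C * (if sd A B = C then blade_sign p A B * x A * y B else 0))"
    unfolding star_def cl_mult_def by (simp only: sum_distrib_left)
  also have "\<dots> = (\<Sum>A\<in>?P. \<Sum>B\<in>?P. if sd A B = C then tau p C * blade_sign p A B * x A * y B else 0)"
    by (intro sum.cong refl) (simp add: mult.assoc)
  also have "\<dots> = (\<Sum>A\<in>?P. \<Sum>B\<in>?P. if sd B A = C then blade_sign p B A * (tau p B * y B) * (tau p A * x A) else 0)"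
  proof (intro sum.cong refl)
    fix A B assume h: "A \<in> ?P" "B \<in> ?P"
    have f: "finite A" "finite B" using h by (auto intro: finite_subset)
    show "(if sd A B = C then tau p C * blade_sign p A B * x A * y B else 0) =
          (if sd B A = C then blade_sign p B A * (tau p B * y B) * (tau p A * x A) else 0)"
    proof (cases "sd A B = C")
      case True
      then have "tau p C * blade_sign p A B = tau p A * tau p B * blade_sign p B A"
        using tau_sd[OF f] by simp
      moreover have "sd B A = C" using True by auto
      ultimately show ?thesis using True by (simp add: ac_simps)
    next
      case False
      then have "sd B A \<noteq> C" by auto
      then show ?thesis using False by simp
    qed
  qed
  also have "\<dots> = cl_mult p q (star p y) (star p x) C"
    unfolding cl_mult_def star_def by (rule sum.swap)
  finally show "star p (cl_mult p q x y) C = cl_mult p q (star p y) (star p x) C" .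
qed

lemma card_sd:
  assumes "finite A" "finite B"
  shows "card (sd A B) + 2 * card (A \<inter> B) = card A + card B"
proof -
  have "card (sd A B) = card (A - B) + card (B - A)" using assms by (intro card_Un_disjoint) auto
  moreover have "card A = card (A - B) + card (A \<inter> B)" using assms
    by (metis Diff_Diff_Int Diff_subset card_Diff_subset Int_lower1 add.commute card_mono finite_Diff le_add_diff_inverse2 finite_Int)
  moreover have "card B = card (B - A) + card (A \<inter> B)" using assms
    by (metis Diff_Diff_Int Diff_subset card_Diff_subset Int_lower1 Int_commute add.commute card_mono finite_Diff le_add_diff_inverse2 finite_Int)
  ultimately show ?thesis by simp
qed

lemma even_sd:
  assumes "finite A" "finite B" "even (card A)" "even (card B)"
  shows "even (card (sd A B))"
  using card_sd[OF assms(1,2)] assms(3,4) by presburger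

lemma sum_nonzero_ex: "sum f S \<noteq> (0::real) \<Longrightarrow> \<exists>x\<in>S. f x \<noteq> 0"
proof (rule ccontr)
  assume "sum f S \<noteq> 0" "\<not> (\<exists>x\<in>S. f x \<noteq> 0)"
  then have "\<forall>x\<in>S. f x = 0" by simp
  then have "sum f S = 0" by (rule sum.neutral)
  with \<open>sum f S \<noteq> 0\<close> show False by simp
qed

lemma cl_mult_even:
  assumes "x \<in> cl_even p q" "y \<in> cl_even p q"
  shows "cl_mult p q x y \<in> cl_even p q"
  unfolding cl_even_def
proof (intro CollectI allI impI)
  fix C assume "cl_mult p q x y C \<noteq> 0"
  then obtain A where hA: "A \<in> Pow {0..<p+q}"
    "(\<Sum>B\<in>Pow {0..<p+q}. if sd A B = C then blade_sign p A B * x A * y B else 0) \<noteq> 0"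
    unfolding cl_mult_def using sum_nonzero_ex by blast
  then obtain B where h: "B \<in> Pow {0..<p+q}"
    "(if sd A B = C then blade_sign p A B * x A * y B else 0) \<noteq> 0"
    using sum_nonzero_ex by blast
  then have "sd A B = C" "x A \<noteq> 0" "y B \<noteq> 0" by (auto split: if_splits)
  then have "even (card A)" "even (card B)" "A \<subseteq> {0..<p+q}" "B \<subseteq> {0..<p+q}"
    using assms unfolding cl_even_def by auto
  moreover have "finite A" "finite B" using \<open>A \<subseteq> {0..<p+q}\<close> \<open>B \<subseteq> {0..<p+q}\<close> finite_subset by auto
  ultimately have "even (card (sd A B))" "sd A B \<subseteq> {0..<p+q}" using even_sd by auto
  then show "C \<subseteq> {0..<p+q} \<and> even (card C)"
    using \<open>sd A B = C\<close> by simp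
qed

lemma cl_even_clifford: "x \<in> cl_even p q \<Longrightarrow> x \<in> clifford p q"
  unfolding cl_even_def clifford_def by auto

lemma star_even: "x \<in> cl_even p q \<Longrightarrow> star p x \<in> cl_even p q"
  unfolding cl_even_def star_def by auto

lemma star_clifford: "x \<in> clifford p q \<Longrightarrow> star p x \<in> clifford p q"
  unfolding clifford_def star_def by auto

lemma cl_one_even: "cl_one \<in> cl_even p q"
  unfolding cl_even_def cl_one_def by auto

lemma cl_one_clifford: "cl_one \<in> clifford p q"
  unfolding clifford_def cl_one_def by auto

lemma blade_even: "A \<subseteq> {0..<p+q} \<Longrightarrow> even (card A) \<Longrightarrow> cl_blade A \<in> cl_even p q"
  unfolding cl_even_def cl_blade_def by auto

lemma blade_clifford: "A \<subseteq> {0..<p+q} \<Longrightarrow> cl_blade A \<in> clifford p q"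
  unfolding clifford_def cl_blade_def by auto

lemma star_blade: "star p (cl_blade A) = (\<lambda>C. tau p A * cl_blade A C)"
  unfolding star_def cl_blade_def by auto

lemma star_one: "star p cl_one = cl_one"
  unfolding star_def cl_one_def tau_def blade_sign_def by auto

lemma sum3_rot: "(\<Sum>a\<in>A. \<Sum>b\<in>B. \<Sum>i\<in>I. f a b i) = (\<Sum>i\<in>I. \<Sum>a\<in>A. \<Sum>b\<in>B. f a b i :: real)"
proof -
  have "(\<Sum>a\<in>A. \<Sum>b\<in>B. \<Sum>i\<in>I. f a b i) = (\<Sum>a\<in>A. \<Sum>i\<in>I. \<Sum>b\<in>B. f a b i)"
    by (rule sum.cong[OF refl], rule sum.swap)
  also have "\<dots> = (\<Sum>i\<in>I. \<Sum>a\<in>A. \<Sum>b\<in>B. f a b i)" by (rule sum.swap)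
  finally show ?thesis .
qed

lemma cl_mult_sum_left:
  "cl_mult p q (\<lambda>A. \<Sum>i\<in>I. f i A) y = (\<lambda>C. \<Sum>i\<in>I. cl_mult p q (f i) y C)"
proof
  fix C
  have "cl_mult p q (\<lambda>A. \<Sum>i\<in>I. f i A) y C = (\<Sum>A\<in>Pow {0..<p+q}. \<Sum>B\<in>Pow {0..<p+q}. \<Sum>i\<in>I.
     if sd A B = C then blade_sign p A B * f i A * y B else 0)"
    unfolding cl_mult_def by (simp only: H1)
  also have "\<dots> = (\<Sum>i\<in>I. cl_mult p q (f i) y C)"
    unfolding cl_mult_def by (rule sum3_rot)
  finally show "cl_mult p q (\<lambda>A. \<Sum>i\<in>I. f i A) y C = (\<Sum>i\<in>I. cl_mult p q (f i) y C)" .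
qed

lemma cl_mult_sum_right:
  "cl_mult p q x (\<lambda>B. \<Sum>i\<in>I. f i B) = (\<lambda>C. \<Sum>i\<in>I. cl_mult p q x (f i) C)"
proof
  fix C
  have "cl_mult p q x (\<lambda>B. \<Sum>i\<in>I. f i B) C = (\<Sum>A\<in>Pow {0..<p+q}. \<Sum>B\<in>Pow {0..<p+q}. \<Sum>i\<in>I.
     if sd A B = C then blade_sign p A B * x A * f i B else 0)"
    unfolding cl_mult_def by (simp only: H2)
  also have "\<dots> = (\<Sum>i\<in>I. cl_mult p q x (f i) C)"
    unfolding cl_mult_def by (rule sum3_rot)
  finally show "cl_mult p q x (\<lambda>B. \<Sum>i\<in>I. f i B) C = (\<Sum>i\<in>I. cl_mult p q x (f i) C)" .
qed

lemma cl_mult_scale_left: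
  "cl_mult p q (\<lambda>A. c * x A) y = (\<lambda>C. c * cl_mult p q x y C)"
  unfolding cl_mult_def
  by (rule ext) (simp add: sum_distrib_left, intro sum.cong refl, simp add: ac_simps)

lemma cl_mult_scale_right:
  "cl_mult p q x (\<lambda>A. c * y A) = (\<lambda>C. c * cl_mult p q x y C)"
  unfolding cl_mult_def
  by (rule ext) (simp add: sum_distrib_left, intro sum.cong refl, simp add: ac_simps)

lemma clifford_expand:
  assumes "x \<in> clifford p q"
  shows "x = (\<lambda>A. \<Sum>B\<in>Pow {0..<p+q}. x B * cl_blade B A)"
proof
  fix A
  show "x A = (\<Sum>B\<in>Pow {0..<p+q}. x B * cl_blade B A)"
  proof (cases "A \<subseteq> {0..<p+q}")
    case True
    then have "(\<Sum>B\<in>Pow {0..<p+q}. x B * cl_blade B A) = x A * cl_blade A A"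
      by (intro sum_single) (auto simp: cl_blade_def)
    then show ?thesis by (simp add: cl_blade_def)
  next
    case False
    then have "x A = 0" using assms by (auto simp: clifford_def)
    moreover have "(\<Sum>B\<in>Pow {0..<p+q}. x B * cl_blade B A) = 0"
      using False by (intro sum.neutral) (auto simp: cl_blade_def)
    ultimately show ?thesis by simp
  qed
qed

lemma cl_vec_std: "cl_vec (std_basis i) = cl_blade {i}"
proof
  fix A
  show "cl_vec (std_basis i) A = cl_blade {i} A"
  proof (cases "card A = 1")
    case True
    then obtain j where "A = {j}" by (auto simp: card_Suc_eq)
    then show ?thesis by (auto simp: cl_vec_def std_basis_def cl_blade_def)
  next
    case False
    then show ?thesis by (auto simp: cl_vec_def cl_blade_def)
  qed
qed

lemma cl_vec_expand:
  assumes "v \<in> Vspace n"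
  shows "cl_vec v = (\<lambda>A. \<Sum>i<n. v i * cl_blade {i} A)"
proof
  fix A
  show "cl_vec v A = (\<Sum>i<n. v i * cl_blade {i} A)"
  proof (cases "card A = 1")
    case True
    then obtain j where j: "A = {j}" by (auto simp: card_Suc_eq)
    show ?thesis
    proof (cases "j < n")
      case True
      then have "(\<Sum>i<n. v i * cl_blade {i} A) = v j * cl_blade {j} A"
        using j by (intro sum_single) (auto simp: cl_blade_def)
      then show ?thesis using j by (simp add: cl_vec_def cl_blade_def)
    next
      case False
      then have "v j = 0" using assms by (simp add: Vspace_def)
      moreover have "(\<Sum>i<n. v i * cl_blade {i} A) = 0"
        using j False by (intro sum.neutral) (auto simp: cl_blade_def)
      ultimately show ?thesis using j by (simp add: cl_vec_def)
    qed
  next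
    case False
    then have "\<forall>i. cl_blade {i} A = 0" by (auto simp: cl_blade_def)
    then show ?thesis using False by (simp add: cl_vec_def)
  qed
qed

lemma cl_vec_clifford: "v \<in> Vspace (p+q) \<Longrightarrow> cl_vec v \<in> clifford p q"
  unfolding clifford_def
proof (intro CollectI allI impI)
  fix A assume v: "v \<in> Vspace (p+q)" and h: "cl_vec v A \<noteq> 0"
  then have "card A = 1" by (auto simp: cl_vec_def split: if_splits)
  then obtain j where j: "A = {j}" by (auto simp: card_Suc_eq)
  then have "v j \<noteq> 0" using h by (simp add: cl_vec_def)
  then have "j < p+q" using v unfolding Vspace_def by (cases "j < p+q") auto
  then show "A \<subseteq> {0..<p+q}" using j by auto
qed

lemma sum_antisym:
  assumes "\<And>i j. i \<in> S \<Longrightarrow> j \<in> S \<Longrightarrow> f i j = - f j i"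
  shows "(\<Sum>i\<in>S. \<Sum>j\<in>S. f i j) = (0::real)"
proof -
  have "(\<Sum>i\<in>S. \<Sum>j\<in>S. f i j) = (\<Sum>j\<in>S. \<Sum>i\<in>S. f i j)" by (rule sum.swap)
  also have "\<dots> = (\<Sum>j\<in>S. \<Sum>i\<in>S. - f j i)" by (intro sum.cong refl assms)
  also have "\<dots> = - (\<Sum>j\<in>S. \<Sum>i\<in>S. f j i)" by (simp add: sum_negf)
  finally have "(\<Sum>i\<in>S. \<Sum>j\<in>S. f i j) = - (\<Sum>j\<in>S. \<Sum>i\<in>S. f j i)" .
  then show ?thesis by linarith
qed

lemma bs_single: "blade_sign p {i} {j} = (if i = j then cl_sq p i else if j < i then -1 else 1)"
proof (cases "i = j")
  case True
  then have "{(a, b). a \<in> {i} \<and> b \<in> {j} \<and> b < a} = {}" by auto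
  then show ?thesis using True unfolding blade_sign_def by (simp only:) simp
next
  case False
  then have i: "{i} \<inter> {j} = {}" by auto
  show ?thesis
  proof (cases "j < i")
    case True
    then have "{(a, b). a \<in> {i} \<and> b \<in> {j} \<and> b < a} = {(i,j)}" by auto
    then show ?thesis using True False i unfolding blade_sign_def by (simp only:) simp
  next
    case F2: False
    then have "{(a, b). a \<in> {i} \<and> b \<in> {j} \<and> b < a} = {}" by auto
    then show ?thesis using F2 False i unfolding blade_sign_def by (simp only:) simp
  qed
qed

lemma vec_sq:
  assumes "u \<in> Vspace (p+q)"
  shows "cl_mult p q (cl_vec u) (cl_vec u) = (\<lambda>C. - pq_inner p q u u * cl_one C)"
proof
  fix C
  let ?n = "p+q"
  let ?T = "\<lambda>i j. u i * u j * (blade_sign p {i} {j} * cl_blade (sd {i} {j}) C)"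
  have sub: "\<And>i. i < ?n \<Longrightarrow> {i} \<subseteq> {0..<p+q}" by auto
  have "cl_mult p q (cl_vec u) (cl_vec u) C = (\<Sum>i<?n. \<Sum>j<?n. ?T i j)"
    unfolding cl_vec_expand[OF assms] cl_mult_sum_left cl_mult_sum_right cl_mult_scale_left cl_mult_scale_right
    by (intro sum.cong refl) (simp add: cl_blade_mult sub mult.assoc)
  also have "\<dots> = (\<Sum>i<?n. \<Sum>j<?n. (if i = j then ?T i j else 0) + (if i = j then 0 else ?T i j))"
    by (intro sum.cong refl) auto
  also have "\<dots> = (\<Sum>i<?n. \<Sum>j<?n. if i = j then ?T i j else 0) + (\<Sum>i<?n. \<Sum>j<?n. if i = j then 0 else ?T i j)"
    by (simp add: sum.distrib)
  also have "(\<Sum>i<?n. \<Sum>j<?n. if i = j then 0 else ?T i j) = 0"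
  proof (rule sum_antisym)
    fix i j show "(if i = j then 0 else ?T i j) = - (if j = i then 0 else ?T j i)"
      by (auto simp: bs_single Un_commute)
  qed
  also have "(\<Sum>i<?n. \<Sum>j<?n. if i = j then ?T i j else 0) = (\<Sum>i<?n. ?T i i)"
    by (intro sum.cong refl) (simp add: sum.delta)
  also have "\<dots> = (\<Sum>i<?n. cl_sq p i * (u i * u i)) * cl_one C"
    unfolding sum_distrib_right by (intro sum.cong refl) (simp add: bs_single cl_one_blade)
  also have "(\<Sum>i<?n. cl_sq p i * (u i * u i)) = - pq_inner p q u u"
  proof -
    have "{..<?n} = {..<p} \<union> {p..<p+q}" by auto
    then have "(\<Sum>i<?n. cl_sq p i * (u i * u i)) = (\<Sum>i<p. cl_sq p i * (u i * u i)) + (\<Sum>i\<in>{p..<p+q}. cl_sq p i * (u i * u i))"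
      by (simp add: sum.union_disjoint ivl_disj_int)
    also have "\<dots> = - (\<Sum>i<p. u i * u i) + (\<Sum>i\<in>{p..<p+q}. u i * u i)"
      by (simp add: cl_sq_def sum_negf)
    finally show ?thesis unfolding pq_inner_def by simp
  qed
  finally show "cl_mult p q (cl_vec u) (cl_vec u) C = - pq_inner p q u u * cl_one C" by simp
qed

lemma star_vec:
  assumes "u \<in> Vspace p"
  shows "star p (cl_vec u) = (\<lambda>A. (-1) * cl_vec u A)"
proof
  fix A
  show "star p (cl_vec u) A = (-1) * cl_vec u A"
  proof (cases "card A = 1")
    case True
    then obtain j where j: "A = {j}" by (auto simp: card_Suc_eq)
    show ?thesis
    proof (cases "j < p")
      case True
      then show ?thesis using j by (simp add: star_def tau_def bs_single cl_sq_def)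
    next
      case False
      then have "u j = 0" using assms unfolding Vspace_def by simp
      then show ?thesis using j by (simp add: star_def cl_vec_def)
    qed
  next
    case False
    then show ?thesis by (simp add: star_def cl_vec_def)
  qed
qed

lemma Vspace_mono: "u \<in> Vspace p \<Longrightarrow> p \<le> n \<Longrightarrow> u \<in> Vspace n"
  unfolding Vspace_def by auto

lemma unit_pos_inner:
  assumes "u \<in> unit_vecs p q (Vspace p)"
  shows "pq_inner p q u u = 1"
proof -
  have u: "u \<in> Vspace p" using assms by (simp add: unit_vecs_def)
  have "(\<Sum>i\<in>{p..<p+q}. u i * u i) = 0" using u by (intro sum.neutral) (auto simp: Vspace_def)
  then have e: "pq_inner p q u u = (\<Sum>i<p. u i * u i)" by (simp add: pq_inner_def)
  have "(\<Sum>i<p. u i * u i) \<ge> 0" by (intro sum_nonneg) simp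
  then show ?thesis using assms e by (auto simp: unit_vecs_def)
qed

lemma unit_star:
  assumes "u \<in> unit_vecs p q (Vspace p)"
  shows "cl_mult p q (star p (cl_vec u)) (cl_vec u) = cl_one"
proof -
  have u: "u \<in> Vspace p" using assms by (simp add: unit_vecs_def)
  then have u2: "u \<in> Vspace (p+q)" by (rule Vspace_mono) simp
  show ?thesis
    unfolding star_vec[OF u] cl_mult_scale_left vec_sq[OF u2] unit_pos_inner[OF assms]
    by simp
qed

lemma cl_prod_clifford: "cl_prod p q xs \<in> clifford p q"
  by (cases xs) (auto simp: cl_prod_def cl_one_clifford cl_mult_in_clifford)

lemma cl_prod_Cons: "cl_prod p q (x # xs) = cl_mult p q x (cl_prod p q xs)"
  by (simp add: cl_prod_def)

lemma prod_star:
  assumes "\<And>x. x \<in> set xs \<Longrightarrow> cl_mult p q (star p x) x = cl_one"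
  shows "cl_mult p q (star p (cl_prod p q xs)) (cl_prod p q xs) = cl_one"
  using assms
proof (induction xs)
  case Nil
  then show ?case by (simp add: cl_prod_def star_one cl_one_mult cl_one_clifford)
next
  case (Cons x xs)
  let ?X = "cl_prod p q xs"
  have IH: "cl_mult p q (star p ?X) ?X = cl_one" using Cons by simp
  have hx: "cl_mult p q (star p x) x = cl_one" using Cons by simp
  have "cl_mult p q (star p (cl_prod p q (x # xs))) (cl_prod p q (x # xs))
      = cl_mult p q (cl_mult p q (star p ?X) (star p x)) (cl_mult p q x ?X)"
    by (simp add: cl_prod_Cons star_mult)
  also have "\<dots> = cl_mult p q (star p ?X) (cl_mult p q (cl_mult p q (star p x) x) ?X)"
    by (simp add: cl_mult_assoc)
  also have "\<dots> = cl_one" by (simp add: hx cl_one_mult cl_prod_clifford IH)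
  finally show ?case .
qed

lemma pin_star:
  assumes "g \<in> pin_group p q (Vspace p)"
  shows "cl_mult p q (star p g) g = cl_one"
proof -
  obtain vs where g: "g = cl_prod p q (map cl_vec vs)" and vs: "set vs \<subseteq> unit_vecs p q (Vspace p)"
    using assms unfolding pin_group_def by blast
  show ?thesis unfolding g
    by (rule prod_star) (use vs unit_star in auto)
qed

lemma pin_clifford: "g \<in> pin_group p q S \<Longrightarrow> g \<in> clifford p q"
  unfolding pin_group_def using cl_prod_clifford by blast

definition sg2 :: "nat \<Rightarrow> real" where
  "sg2 n = (-1) ^ (n * (n - 1) div 2)"

lemma m1pow: "(-1::real) ^ n = (if even n then 1 else -1)"
  by (simp add: minus_one_power_iff)

lemma sg2_Suc: "sg2 (Suc n) = sg2 n * (-1) ^ n"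
proof -
  have "Suc n * n div 2 = n * (n - 1) div 2 + n"
  proof (cases n)
    case 0 then show ?thesis by simp
  next
    case (Suc m)
    have "Suc n * n = n * (n - 1) + 2 * n" using Suc by (simp add: algebra_simps)
    then show ?thesis by simp
  qed
  then show ?thesis unfolding sg2_def by (simp add: power_add)
qed

lemma sg2_add: "sg2 (m + n) = sg2 m * sg2 n * (-1) ^ (m * n)"
proof (induction n)
  case 0 then show ?case by (simp add: sg2_def)
next
  case (Suc n)
  have "sg2 (m + Suc n) = sg2 (m + n) * (-1) ^ (m + n)" by (simp add: sg2_Suc)
  also have "\<dots> = sg2 m * (sg2 n * (-1) ^ n) * (-1) ^ (m * Suc n)"
    using Suc by (simp add: power_add ac_simps)
  also have "\<dots> = sg2 m * sg2 (Suc n) * (-1) ^ (m * Suc n)" by (simp add: sg2_Suc)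
  finally show ?case .
qed

lemma sg2_sq: "sg2 n * sg2 n = 1"
  unfolding sg2_def by (simp add: power_mult_distrib[symmetric])

lemma m1_sq: "(-1::real) ^ (c * c) = (-1) ^ c"
  by (simp add: m1pow)

lemma sg2_double: "sg2 (c + c) = (-1) ^ c"
  using sg2_add[of c c] sg2_sq[of c] m1_sq[of c] by simp

lemma sg2_p: "p mod 4 = 3 \<Longrightarrow> sg2 p = -1"
proof -
  assume h: "p mod 4 = 3"
  then obtain k where k: "p = 4 * k + 3" by (metis div_mult_mod_eq add.commute mult.commute)
  have "p * (p - 1) = 2 * ((4 * k + 3) * (2 * k + 1))" using k by (simp add: algebra_simps)
  then have "p * (p - 1) div 2 = (4 * k + 3) * (2 * k + 1)" by simp
  moreover have "odd ((4 * k + 3) * (2 * k + 1))" by simp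
  ultimately show ?thesis unfolding sg2_def by (simp add: m1pow)
qed

definition Tset :: "nat \<Rightarrow> nat set \<Rightarrow> nat set" where
  "Tset p A = ((+) p ` A) \<union> (if odd (card A) then {0..<p} else {})"

definition sig :: "nat set \<Rightarrow> real" where
  "sig A = sg2 (card A)"

lemma invs_shift: "invs ((+) p ` A) ((+) p ` B) = invs A B"
  unfolding invs_def by (simp add: prod.reindex inj_on_def chi_def)

lemma invs_one: "(\<And>a b. a \<in> X \<Longrightarrow> b \<in> Y \<Longrightarrow> a \<le> b) \<Longrightarrow> invs X Y = 1"
  unfolding invs_def chi_def by (intro prod.neutral ballI) (auto simp: not_less)

lemma invs_shift_low:
  assumes "finite A"
  shows "invs ((+) p ` A) {0..<p} = (-1) ^ (card A * p)"
proof -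
  have "invs ((+) p ` A) {0..<p} = (\<Prod>a\<in>A. \<Prod>b\<in>{0..<p}. chi (p + a) b)"
    unfolding invs_def by (simp add: prod.reindex inj_on_def)
  also have "\<dots> = (\<Prod>a\<in>A. (-1) ^ p)" by (intro prod.cong refl) (simp add: chi_def)
  also have "\<dots> = (-1) ^ (card A * p)" by (simp add: power_mult[symmetric] mult.commute)
  finally show ?thesis .
qed

lemma invs_Omega: "invs {0..<p} {0..<p} = sg2 p"
proof (induction p)
  case 0 then show ?case by (simp add: invs_def sg2_def)
next
  case (Suc p)
  have e: "{0..<Suc p} = insert p {0..<p}" by auto
  have a: "(\<Prod>b\<in>{0..<Suc p}. chi p b) = (-1) ^ p"
    unfolding e by (simp add: chi_def)
  have b: "(\<Prod>a\<in>{0..<p}. \<Prod>b\<in>{0..<Suc p}. chi a b) = invs {0..<p} {0..<p}"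
  proof -
    have "\<And>a. a \<in> {0..<p} \<Longrightarrow> (\<Prod>b\<in>{0..<Suc p}. chi a b) = (\<Prod>b\<in>{0..<p}. chi a b)"
    proof -
      fix a assume "a \<in> {0..<p}"
      then have "chi a p = 1" by (simp add: chi_def)
      then show "(\<Prod>b\<in>{0..<Suc p}. chi a b) = (\<Prod>b\<in>{0..<p}. chi a b)" by (simp add: e)
    qed
    then show ?thesis unfolding invs_def by (rule prod.cong[OF refl])
  qed
  have "invs {0..<Suc p} {0..<Suc p} = (\<Prod>b\<in>{0..<Suc p}. chi p b) * (\<Prod>a\<in>{0..<p}. \<Prod>b\<in>{0..<Suc p}. chi a b)"
    unfolding invs_def by (subst e) simp
  then show ?case using a b Suc by (simp add: sg2_Suc)
qed

lemma Qs_Omega: "Qs p {0..<p} = (-1) ^ p"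
  unfolding Qs_def cl_sq_def by simp

lemma Qs_shift: "Qs p ((+) p ` A) = 1"
  unfolding Qs_def cl_sq_def by (intro prod.neutral) auto

lemma Qs_low: "A \<subseteq> {0..<q} \<Longrightarrow> Qs q A = (-1) ^ card A"
  unfolding Qs_def cl_sq_def by (subst prod.cong[OF refl, of _ _ "\<lambda>_. -1"]) auto

lemma Tset_sd:
  assumes "finite A" "finite B"
  shows "sd (Tset p A) (Tset p B) = Tset p (sd A B)"
proof -
  have sh: "sd ((+) p ` A) ((+) p ` B) = (+) p ` (sd A B)" by auto
  have par: "odd (card (sd A B)) \<longleftrightarrow> (odd (card A) \<noteq> odd (card B))"
    using card_sd[OF assms] by presburger
  have dis: "\<And>X. (+) p ` X \<inter> {0..<p} = {}" by auto
  show ?thesis unfolding Tset_def using par dis sh by (auto split: if_splits)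
qed

lemma Tset_sub: "A \<subseteq> {0..<q} \<Longrightarrow> Tset p A \<subseteq> {0..<p+q}"
  unfolding Tset_def by auto

lemma Tset_card:
  assumes "finite A" "odd p"
  shows "even (card (Tset p A))"
proof -
  have "card (Tset p A) = card A + (if odd (card A) then p else 0)"
    unfolding Tset_def using assms
    by (subst card_Un_disjoint) (auto simp: card_image inj_on_def)
  then show ?thesis using assms by auto
qed

lemma sig_arith:
  assumes "a + b = s + 2 * c" "odd p"
  shows "sg2 a * sg2 b * (if odd b then (-1) ^ (a * p) else 1) = (-1) ^ c * sg2 s"
proof -
  have e1: "(if odd b then (-1::real) ^ (a * p) else 1) = (-1) ^ (a * b)"
    using assms(2) by (auto simp: m1pow)
  have "sg2 (a + b) = sg2 a * sg2 b * (-1) ^ (a * b)" by (rule sg2_add)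
  moreover have "sg2 (a + b) = sg2 s * (-1) ^ c"
  proof -
    have "sg2 (a + b) = sg2 (s + (c + c))" using assms(1) by (simp add: mult_2)
    also have "\<dots> = sg2 s * sg2 (c + c) * (-1) ^ (s * (c + c))" by (rule sg2_add)
    also have "\<dots> = sg2 s * (-1) ^ c" by (simp add: sg2_double m1pow)
    finally show ?thesis .
  qed
  ultimately show ?thesis using e1 by (simp add: ac_simps)
qed

lemma iota_sign:
  assumes p3: "p mod 4 = 3" and A: "A \<subseteq> {0..<q}" and B: "B \<subseteq> {0..<q}"
  shows "sig A * sig B * blade_sign p (Tset p A) (Tset p B) = blade_sign q A B * sig (sd A B)"
proof -
  have fA: "finite A" and fB: "finite B" using A B finite_subset by auto
  have oddp: "odd p" using p3 by presburger
  define SA where "SA = (+) p ` A"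
  define SB where "SB = (+) p ` B"
  define OA where "OA = (if odd (card A) then {0..<p} else ({}::nat set))"
  define OB where "OB = (if odd (card B) then {0..<p} else ({}::nat set))"
  have fin: "finite SA" "finite SB" "finite OA" "finite OB" using fA fB by (auto simp: SA_def SB_def OA_def OB_def)
  have TA: "Tset p A = sd SA OA" unfolding Tset_def SA_def OA_def by auto
  have TB: "Tset p B = sd SB OB" unfolding Tset_def SB_def OB_def by auto
  have TAB: "Tset p A \<inter> Tset p B = sd (SA \<inter> SB) (OA \<inter> OB)"
    unfolding Tset_def SA_def OA_def SB_def OB_def by auto
  have fT: "finite (Tset p A)" "finite (Tset p B)" using fin TA TB by auto
  have inv: "invs (Tset p A) (Tset p B) = invs SA SB * invs SA OB * (invs OA SB * invs OA OB)"
    unfolding TA TB using fin by (simp add: invs_sd_left invs_sd_right)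
  have Q: "Qs p (Tset p A \<inter> Tset p B) = Qs p (SA \<inter> SB) * Qs p (OA \<inter> OB)"
    unfolding TAB using fin by (intro Qs_sd) auto
  have q1: "Qs p (SA \<inter> SB) = 1"
  proof -
    have "SA \<inter> SB = (+) p ` (A \<inter> B)" unfolding SA_def SB_def by auto
    then show ?thesis by (simp add: Qs_shift)
  qed
  have i1: "invs SA SB = invs A B" unfolding SA_def SB_def by (rule invs_shift)
  have i2: "invs OA SB = 1" unfolding OA_def SB_def by (intro invs_one) (auto split: if_splits)
  have i3: "invs SA OB = (if odd (card B) then (-1) ^ (card A * p) else 1)"
    unfolding SA_def OB_def using invs_shift_low[OF fA, of p] by (simp add: invs_def)
  have i4: "invs OA OB * Qs p (OA \<inter> OB) = 1"
  proof (cases "odd (card A) \<and> odd (card B)")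
    case True
    then show ?thesis unfolding OA_def OB_def using sg2_p[OF p3] oddp by (simp add: invs_Omega Qs_Omega)
  next
    case False
    then have "OA = {} \<or> OB = {}" unfolding OA_def OB_def by auto
    then show ?thesis by (auto simp: invs_def Qs_def)
  qed
  have bq: "blade_sign q A B = invs A B * (-1) ^ card (A \<inter> B)"
  proof -
    have "Qs q (A \<inter> B) = (-1) ^ card (A \<inter> B)" using A by (intro Qs_low) auto
    then show ?thesis using fA fB by (simp add: blade_sign_eq)
  qed
  have cs: "card A + card B = card (sd A B) + 2 * card (A \<inter> B)"
    using card_sd[OF fA fB] by simp
  have ar: "sg2 (card A) * sg2 (card B) * (if odd (card B) then (-1) ^ (card A * p) else 1)
      = (-1) ^ card (A \<inter> B) * sg2 (card (sd A B))"
    by (rule sig_arith[OF cs oddp])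
  have "sig A * sig B * blade_sign p (Tset p A) (Tset p B)
     = invs A B * (sg2 (card A) * sg2 (card B) * (if odd (card B) then (-1) ^ (card A * p) else 1)) * (invs OA OB * Qs p (OA \<inter> OB))"
    unfolding blade_sign_eq[OF fT] inv Q q1 i1 i2 i3 sig_def by (simp only: ac_simps mult_1_left mult_1_right)
  also have "\<dots> = blade_sign q A B * sig (sd A B)"
    unfolding i4 ar bq sig_def by (simp only: ac_simps mult_1_right)
  finally show ?thesis .
qed

lemma sorted_insert_min:
  assumes "finite A" "\<forall>a\<in>A. b < a"
  shows "sorted_list_of_set (insert b A) = b # sorted_list_of_set A"
proof -
  have "b \<notin> A" using assms by auto
  then have "sorted_list_of_set (insert b A) = insort b (sorted_list_of_set A)"
    using assms by (simp add: sorted_list_of_set_insert)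
  also have "\<dots> = b # sorted_list_of_set A"
    using assms by (intro insort_is_Cons) (auto simp: less_imp_le)
  finally show ?thesis .
qed

lemma scale_mult_blades:
  assumes "X \<subseteq> {0..<p+q}" "Y \<subseteq> {0..<p+q}"
  shows "cl_mult p q (\<lambda>C. a * cl_blade X C) (\<lambda>C. b * cl_blade Y C) = (\<lambda>C. a * b * blade_sign p X Y * cl_blade (sd X Y) C)"
  unfolding cl_mult_scale_left cl_mult_scale_right cl_blade_mult[OF assms] by (simp add: ac_simps)

lemma iota_factor:
  assumes "b < q"
  shows "cl_mult p q (cl_blade {0..<p}) (cl_vec (std_basis (p + b))) = (\<lambda>C. sig {b} * cl_blade (Tset p {b}) C)"
proof -
  have s: "{0..<p} \<subseteq> {0..<p+q}" "{p+b} \<subseteq> {0..<p+q}" using assms by auto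
  have t: "Tset p {b} = sd {0..<p} {p+b}" unfolding Tset_def by auto
  have bs: "blade_sign p {0..<p} {p+b} = 1"
  proof -
    have "invs {0..<p} {p+b} = 1" by (intro invs_one) auto
    moreover have "{0..<p} \<inter> {p+b} = {}" by auto
    ultimately show ?thesis by (simp add: blade_sign_eq Qs_def)
  qed
  show ?thesis unfolding cl_vec_std cl_blade_mult[OF s] t bs by (simp add: sig_def sg2_def)
qed

lemma iota_blade_eq:
  assumes p3: "p mod 4 = 3" and A: "A \<subseteq> {0..<q}"
  shows "iota_blade p q A = (\<lambda>C. sig A * cl_blade (Tset p A) C)"
proof -
  have "finite A" using A finite_subset by auto
  then show ?thesis using A
  proof (induction A rule: finite_linorder_min_induct)
    case empty
    then show ?case by (simp add: iota_blade_def cl_prod_def cl_one_blade sig_def sg2_def Tset_def)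
  next
    case (insert b A)
    have bq: "b < q" and Aq: "A \<subseteq> {0..<q}" using insert by auto
    have IH: "iota_blade p q A = (\<lambda>C. sig A * cl_blade (Tset p A) C)" using insert Aq by simp
    have "iota_blade p q (insert b A) = cl_mult p q (cl_mult p q (cl_blade {0..<p}) (cl_vec (std_basis (p + b)))) (iota_blade p q A)"
    proof -
      have "sorted_list_of_set (insert b A) = b # sorted_list_of_set A"
        using insert by (intro sorted_insert_min) auto
      then show ?thesis unfolding iota_blade_def by (simp only: list.map cl_prod_Cons)
    qed
    also have "\<dots> = cl_mult p q (\<lambda>C. sig {b} * cl_blade (Tset p {b}) C) (\<lambda>C. sig A * cl_blade (Tset p A) C)"
      unfolding IH iota_factor[OF bq] ..
    also have "\<dots> = (\<lambda>C. sig {b} * sig A * blade_sign p (Tset p {b}) (Tset p A) * cl_blade (sd (Tset p {b}) (Tset p A)) C)"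
      by (rule scale_mult_blades) (use bq Aq in \<open>auto intro!: Tset_sub\<close>)
    also have "\<dots> = (\<lambda>C. sig (insert b A) * cl_blade (Tset p (insert b A)) C)"
    proof -
      have b1: "{b} \<subseteq> {0..<q}" using bq by auto
      have "sig {b} * sig A * blade_sign p (Tset p {b}) (Tset p A) = blade_sign q {b} A * sig (sd {b} A)"
        by (rule iota_sign[OF p3 b1 Aq])
      moreover have "blade_sign q {b} A = 1"
      proof -
        have "invs {b} A = 1" using insert by (intro invs_one) (auto simp: less_imp_le)
        moreover have "{b} \<inter> A = {}" using insert by auto
        ultimately show ?thesis using insert by (simp add: blade_sign_eq Qs_def)
      qed
      moreover have "sd {b} A = insert b A" using insert by auto
      moreover have "sd (Tset p {b}) (Tset p A) = Tset p (insert b A)"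
        using Tset_sd[of "{b}" A p] insert \<open>sd {b} A = insert b A\<close> by simp
      ultimately show ?thesis by simp
    qed
    finally show ?case .
  qed
qed

lemma iota_expand:
  assumes p3: "p mod 4 = 3"
  shows "iota p q x = (\<lambda>C. \<Sum>A\<in>Pow {0..<q}. (x A * sig A) * cl_blade (Tset p A) C)"
  unfolding iota_def by (rule ext, intro sum.cong refl) (simp add: iota_blade_eq[OF p3] mult.assoc)

lemma tau_Tset:
  assumes p3: "p mod 4 = 3" and A: "A \<subseteq> {0..<q}"
  shows "tau p (Tset p A) = tau q A"
proof -
  have "sig A * sig A * blade_sign p (Tset p A) (Tset p A) = blade_sign q A A * sig (sd A A)"
    by (rule iota_sign[OF p3 A A])
  moreover have "sig A * sig A = 1" unfolding sig_def by (rule sg2_sq)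
  moreover have "sig (sd A A) = 1" by (simp add: sig_def sg2_def)
  ultimately show ?thesis unfolding tau_def by simp
qed

lemma iota_hom:
  assumes p3: "p mod 4 = 3"
  shows "iota p q (cl_mult q 0 x y) = cl_mult p q (iota p q x) (iota p q y)"
proof
  fix C
  let ?Q = "Pow {0..<q}"
  have fQ: "finite ?Q" by simp
  have sub: "\<And>A. A \<in> ?Q \<Longrightarrow> Tset p A \<subseteq> {0..<p+q}" by (auto intro!: Tset_sub)
  have "iota p q (cl_mult q 0 x y) C =
      (\<Sum>D\<in>?Q. \<Sum>A\<in>?Q. \<Sum>B\<in>?Q. if sd A B = D then blade_sign q A B * x A * y B * (sig D * cl_blade (Tset p D) C) else 0)"
    unfolding iota_expand[OF p3] cl_mult_def
    by (simp only: add_0_right sum_distrib_right) (intro sum.cong refl, simp)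
  also have "\<dots> = (\<Sum>A\<in>?Q. \<Sum>B\<in>?Q. \<Sum>D\<in>?Q. if sd A B = D then blade_sign q A B * x A * y B * (sig D * cl_blade (Tset p D) C) else 0)"
    by (rule sum3_rot[symmetric])
  also have "\<dots> = (\<Sum>A\<in>?Q. \<Sum>B\<in>?Q. blade_sign q A B * x A * y B * (sig (sd A B) * cl_blade (Tset p (sd A B)) C))"
    by (intro sum.cong refl, subst sum_collapse[OF fQ]) auto
  also have "\<dots> = (\<Sum>A\<in>?Q. \<Sum>B\<in>?Q. (x A * sig A) * (y B * sig B) * blade_sign p (Tset p A) (Tset p B) * cl_blade (sd (Tset p A) (Tset p B)) C)"
  proof (intro sum.cong refl)
    fix A B assume h: "A \<in> ?Q" "B \<in> ?Q"
    then have s: "sig A * sig B * blade_sign p (Tset p A) (Tset p B) = blade_sign q A B * sig (sd A B)"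
      by (intro iota_sign[OF p3]) auto
    have t: "sd (Tset p A) (Tset p B) = Tset p (sd A B)" using h finite_subset by (intro Tset_sd) auto
    show "blade_sign q A B * x A * y B * (sig (sd A B) * cl_blade (Tset p (sd A B)) C) =
      (x A * sig A) * (y B * sig B) * blade_sign p (Tset p A) (Tset p B) * cl_blade (sd (Tset p A) (Tset p B)) C"
      unfolding t using s by (simp add: ac_simps)
  qed
  also have "\<dots> = cl_mult p q (iota p q x) (iota p q y) C"
    unfolding iota_expand[OF p3] cl_mult_sum_left cl_mult_sum_right cl_mult_scale_left cl_mult_scale_right
    by (intro sum.cong refl) (simp add: cl_blade_mult sub ac_simps)
  finally show "iota p q (cl_mult q 0 x y) C = cl_mult p q (iota p q x) (iota p q y) C" .
qed

lemma star_iota: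
  assumes p3: "p mod 4 = 3"
  shows "star p (iota p q x) = iota p q (star q x)"
proof
  fix C
  have "star p (iota p q x) C = (\<Sum>A\<in>Pow {0..<q}. tau p C * ((x A * sig A) * cl_blade (Tset p A) C))"
    unfolding star_def iota_expand[OF p3] by (simp add: sum_distrib_left)
  also have "\<dots> = (\<Sum>A\<in>Pow {0..<q}. (tau q A * x A * sig A) * cl_blade (Tset p A) C)"
  proof (intro sum.cong refl)
    fix A assume "A \<in> Pow {0..<q}"
    then have "tau p (Tset p A) = tau q A" by (intro tau_Tset[OF p3]) auto
    then show "tau p C * ((x A * sig A) * cl_blade (Tset p A) C) = (tau q A * x A * sig A) * cl_blade (Tset p A) C"
      by (cases "C = Tset p A") (auto simp: cl_blade_def)
  qed
  also have "\<dots> = iota p q (star q x) C"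
    unfolding iota_expand[OF p3] star_def ..
  finally show "star p (iota p q x) C = iota p q (star q x) C" .
qed

lemma iota_one:
  assumes p3: "p mod 4 = 3"
  shows "iota p q cl_one = cl_one"
proof
  fix C
  have "iota p q cl_one C = (cl_one {} * sig {}) * cl_blade (Tset p {}) C"
    unfolding iota_expand[OF p3] by (intro sum_single) (auto simp: cl_one_def)
  then show "iota p q cl_one C = cl_one C"
    by (simp add: cl_one_def sig_def sg2_def Tset_def cl_blade_def)
qed

lemma iota_even:
  assumes p3: "p mod 4 = 3"
  shows "iota p q x \<in> cl_even p q"
  unfolding cl_even_def
proof (intro CollectI allI impI)
  fix C assume "iota p q x C \<noteq> 0"
  then obtain A where A: "A \<in> Pow {0..<q}" "(x A * sig A) * cl_blade (Tset p A) C \<noteq> 0"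
    unfolding iota_expand[OF p3] using sum_nonzero_ex by blast
  then have C: "C = Tset p A" by (auto simp: cl_blade_def split: if_splits)
  have "odd p" using p3 by presburger
  moreover have "finite A" using A finite_subset by auto
  ultimately show "C \<subseteq> {0..<p+q} \<and> even (card C)"
    unfolding C using A Tset_card Tset_sub by auto
qed

lemma pin_iota_star:
  assumes p3: "p mod 4 = 3" and g: "g \<in> pin_group q 0 (Vspace q)"
  shows "cl_mult p q (star p (iota p q g)) (iota p q g) = cl_one"
proof -
  have "cl_mult q 0 (star q g) g = cl_one" using pin_star[of g q 0] g by simp
  then have "iota p q (cl_mult q 0 (star q g) g) = cl_one" by (simp add: iota_one[OF p3])
  then show ?thesis unfolding iota_hom[OF p3] star_iota[OF p3] .
qed

lemma spin_pin: "s \<in> spin_group p q S \<Longrightarrow> s \<in> pin_group p q S"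
  unfolding spin_group_def by simp

lemma Khat_even:
  assumes p3: "p mod 4 = 3" and k: "k \<in> Khat p q"
  shows "k \<in> cl_even p q"
proof -
  obtain s g where k: "k = cl_mult p q s (iota p q g)" and s: "s \<in> spin_group p q (Vspace p)"
    using k unfolding Khat_def by blast
  have "s \<in> cl_even p q" using s unfolding spin_group_def by simp
  then show ?thesis unfolding k by (intro cl_mult_even iota_even[OF p3])
qed

lemma Khat_star:
  assumes p3: "p mod 4 = 3" and k: "k \<in> Khat p q"
  shows "cl_mult p q (star p k) k = cl_one"
proof -
  obtain s g where k: "k = cl_mult p q s (iota p q g)" and s: "s \<in> spin_group p q (Vspace p)"
    and g: "g \<in> pin_group q 0 (Vspace q)"
    using k unfolding Khat_def by blast
  let ?i = "iota p q g"
  have ss: "cl_mult p q (star p s) s = cl_one" using s by (intro pin_star spin_pin)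
  have ii: "cl_mult p q (star p ?i) ?i = cl_one" by (rule pin_iota_star[OF p3 g])
  have ic: "?i \<in> clifford p q" using iota_even[OF p3] by (rule cl_even_clifford)
  have "cl_mult p q (star p k) k = cl_mult p q (cl_mult p q (star p ?i) (star p s)) (cl_mult p q s ?i)"
    unfolding k star_mult ..
  also have "\<dots> = cl_mult p q (star p ?i) (cl_mult p q (cl_mult p q (star p s) s) ?i)"
    by (simp add: cl_mult_assoc)
  also have "\<dots> = cl_one" unfolding ss cl_one_mult[OF ic] ii ..
  finally show ?thesis .
qed

lemma blade_prod:
  assumes "finite S" "S \<subseteq> {0..<p+q}"
  shows "cl_prod p q (map (\<lambda>i. cl_vec (std_basis i)) (sorted_list_of_set S)) = cl_blade S"
  using assms
proof (induction S rule: finite_linorder_min_induct)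
  case empty
  then show ?case by (simp add: cl_prod_def cl_one_blade)
next
  case (insert b A)
  have s: "{b} \<subseteq> {0..<p+q}" "A \<subseteq> {0..<p+q}" using insert by auto
  have bs: "blade_sign p {b} A = 1"
  proof -
    have "invs {b} A = 1" using insert by (intro invs_one) (auto simp: less_imp_le)
    moreover have "{b} \<inter> A = {}" using insert by auto
    ultimately show ?thesis using insert by (simp add: blade_sign_eq Qs_def)
  qed
  have e: "sd {b} A = insert b A" using insert by auto
  have "cl_prod p q (map (\<lambda>i. cl_vec (std_basis i)) (sorted_list_of_set (insert b A)))
      = cl_mult p q (cl_blade {b}) (cl_blade A)"
  proof -
    have "sorted_list_of_set (insert b A) = b # sorted_list_of_set A"
      using insert by (intro sorted_insert_min) auto
    then show ?thesis using insert s by (simp only: list.map cl_prod_Cons cl_vec_std)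
  qed
  also have "\<dots> = cl_blade (insert b A)"
    unfolding cl_blade_mult[OF s] bs e by simp
  finally show ?case .
qed

lemma std_unit:
  assumes "i < p"
  shows "std_basis i \<in> unit_vecs p q (Vspace p)"
proof -
  have v: "std_basis i \<in> Vspace p" using assms by (auto simp: Vspace_def std_basis_def)
  have "(\<Sum>j<p. std_basis i j * std_basis i j) = 1"
    using assms by (subst sum_single[of _ i]) (auto simp: std_basis_def)
  moreover have "(\<Sum>j\<in>{p..<p+q}. std_basis i j * std_basis i j) = 0"
    using assms by (intro sum.neutral) (auto simp: std_basis_def)
  ultimately have "pq_inner p q (std_basis i) (std_basis i) = 1" by (simp add: pq_inner_def)
  then show ?thesis using v by (simp add: unit_vecs_def)
qed

lemma blade_pin:
  assumes "S \<subseteq> {0..<p}"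
  shows "cl_blade S \<in> pin_group p q (Vspace p)"
proof -
  have f: "finite S" using assms finite_subset by auto
  have "cl_blade S = cl_prod p q (map cl_vec (map std_basis (sorted_list_of_set S)))"
  proof -
    have "S \<subseteq> {0..<p+q}" using assms by auto
    then have "cl_prod p q (map (\<lambda>i. cl_vec (std_basis i)) (sorted_list_of_set S)) = cl_blade S"
      by (rule blade_prod[OF f])
    then show ?thesis by (simp add: comp_def)
  qed
  moreover have "set (map std_basis (sorted_list_of_set S)) \<subseteq> unit_vecs p q (Vspace p)"
    using assms f std_unit by auto
  ultimately show ?thesis unfolding pin_group_def by blast
qed

lemma pm1_mult: "(a::real) \<in> {1,-1} \<Longrightarrow> b \<in> {1,-1} \<Longrightarrow> a * b \<in> {1,-1}" by auto

lemma sq1_pm: "(a::real) * a = 1 \<Longrightarrow> a \<in> {1,-1}"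
  by (metis insert_iff square_eq_1_iff)

lemma blade_Khat:
  assumes p3: "p mod 4 = 3" and A: "A \<subseteq> {0..<p+q}" "even (card A)"
  shows "\<exists>k\<in>Khat p q. \<exists>c\<in>{1,-1}. cl_blade A = (\<lambda>C. c * k C)"
proof -
  define A1 where "A1 = A \<inter> {0..<p}"
  define A2 where "A2 = A - {0..<p}"
  define B where "B = (\<lambda>i. i - p) ` A2"
  have fA: "finite A" using A finite_subset by auto
  have A2B: "(+) p ` B = A2"
  proof -
    have "\<And>x. x \<in> A2 \<Longrightarrow> p + (x - p) = x" unfolding A2_def by auto
    then show ?thesis unfolding B_def by (force simp: image_iff)
  qed
  have Bq: "B \<subseteq> {0..<q}" unfolding B_def A2_def using A by auto
  have fB: "finite B" using Bq finite_subset by auto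
  have cB: "card B = card A2" using A2B card_image[of "(+) p" B] by (simp add: inj_on_def)
  have cA: "card A = card A1 + card A2" unfolding A1_def A2_def using fA
    by (metis Diff_Diff_Int Int_commute card_Diff_subset_Int card_Un_disjoint Diff_disjoint Int_Diff_Un finite_Diff finite_Int Int_Diff_disjoint card_Int_Diff inf_commute)
  define S where "S = (if odd (card B) then {0..<p} - A1 else A1)"
  have Sp: "S \<subseteq> {0..<p}" unfolding S_def A1_def by auto
  have Sev: "even (card S)"
  proof (cases "odd (card B)")
    case True
    then have "odd (card A1)" using cA cB A(2) by presburger
    moreover have "card ({0..<p} - A1) = p - card A1" unfolding A1_def by (subst card_Diff_subset) auto
    moreover have "card A1 \<le> p" unfolding A1_def by (metis card_atLeastLessThan card_mono finite_atLeastLessThan inf_le2 diff_zero)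
    moreover have "odd p" using p3 by presburger
    ultimately show ?thesis unfolding S_def using True by auto
  next
    case False
    then show ?thesis unfolding S_def using cA cB A(2) by auto
  qed
  have sdA: "sd S (Tset p B) = A"
    unfolding S_def Tset_def A2B using A unfolding A1_def A2_def by auto
  define s where "s = cl_blade S"
  define g where "g = cl_blade B"
  have s_spin: "s \<in> spin_group p q (Vspace p)"
  proof -
    have "S \<subseteq> {0..<p+q}" using Sp by auto
    then have "cl_blade S \<in> cl_even p q" using Sev by (intro blade_even)
    then show ?thesis unfolding spin_group_def s_def using blade_pin[OF Sp, of q] by auto
  qed
  have g_pin: "g \<in> pin_group q 0 (Vspace q)" unfolding g_def using blade_pin[of B q 0] Bq by simp
  have ig: "iota p q g = (\<lambda>C. sig B * cl_blade (Tset p B) C)"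
    unfolding iota_def g_def
  proof
    fix C
    show "(\<Sum>A'\<in>Pow {0..<q}. cl_blade B A' * iota_blade p q A' C) = sig B * cl_blade (Tset p B) C"
      using Bq by (subst sum_single[of _ B]) (auto simp: cl_blade_def iota_blade_eq[OF p3 Bq])
  qed
  have k: "cl_mult p q s (iota p q g) = (\<lambda>C. sig B * blade_sign p S (Tset p B) * cl_blade A C)"
  proof -
    have sub: "S \<subseteq> {0..<p+q}" "Tset p B \<subseteq> {0..<p+q}" using Sp Tset_sub[OF Bq] by auto
    show ?thesis unfolding s_def ig cl_mult_scale_right cl_blade_mult[OF sub] sdA by (simp add: ac_simps)
  qed
  define c where "c = sig B * blade_sign p S (Tset p B)"
  have fS: "finite S" "finite (Tset p B)" using Sp Tset_sub[OF Bq, of p] by (auto intro: finite_subset)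
  have c2: "c * c = 1" unfolding c_def sig_def
    using sg2_sq[of "card B"] blade_sign_sq[OF fS, of p]
    by (metis mult.assoc mult.commute mult.left_neutral)
  have "cl_blade A = (\<lambda>C. c * cl_mult p q s (iota p q g) C)"
    unfolding k c_def using c2 unfolding c_def by (auto simp: mult.assoc[symmetric])
  moreover have "cl_mult p q s (iota p q g) \<in> Khat p q" unfolding Khat_def using s_spin g_pin by blast
  ultimately show ?thesis using sq1_pm[OF c2] by blast
qed

definition Ev :: "nat \<Rightarrow> nat \<Rightarrow> nat set set" where
  "Ev p q = {A \<in> Pow {0..<p+q}. even (card A)}"

lemma Ev_finite: "finite (Ev p q)" unfolding Ev_def by simp

lemma Ev_blade: "A \<in> Ev p q \<Longrightarrow> cl_blade A \<in> cl_even p q"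
  unfolding Ev_def by (auto intro: blade_even)

lemma Ev_sd: "A \<in> Ev p q \<Longrightarrow> B \<in> Ev p q \<Longrightarrow> sd A B \<in> Ev p q"
  unfolding Ev_def using even_sd finite_subset by (auto intro: finite_subset)

lemma even_expand:
  assumes "x \<in> cl_even p q"
  shows "x = (\<lambda>C. \<Sum>A\<in>Ev p q. x A * cl_blade A C)"
proof
  fix C
  show "x C = (\<Sum>A\<in>Ev p q. x A * cl_blade A C)"
  proof (cases "C \<in> Ev p q")
    case True
    then have "(\<Sum>A\<in>Ev p q. x A * cl_blade A C) = x C * cl_blade C C"
      by (intro sum_single[OF Ev_finite]) (auto simp: cl_blade_def)
    then show ?thesis by (simp add: cl_blade_def)
  next
    case False
    then have "x C = 0" using assms by (auto simp: cl_even_def Ev_def)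
    moreover have "(\<Sum>A\<in>Ev p q. x A * cl_blade A C) = 0"
      using False by (intro sum.neutral) (auto simp: cl_blade_def)
    ultimately show ?thesis by simp
  qed
qed

lemma even_sum: "(\<And>i. i \<in> I \<Longrightarrow> f i \<in> cl_even p q) \<Longrightarrow> (\<lambda>A. \<Sum>i\<in>I. f i A) \<in> cl_even p q"
  unfolding cl_even_def using sum_nonzero_ex by fastforce

lemma even_scale: "x \<in> cl_even p q \<Longrightarrow> (\<lambda>A. c * x A) \<in> cl_even p q"
  unfolding cl_even_def by auto

lemma bil_sum_left: "bilinear_form \<beta> \<Longrightarrow> \<beta> (\<Sum>i\<in>I. f i) t = (\<Sum>i\<in>I. \<beta> (f i) t)"
  unfolding bilinear_form_def using real_vector.linear_sum[of "\<lambda>s. \<beta> s t"] by blast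
lemma bil_sum_right: "bilinear_form \<beta> \<Longrightarrow> \<beta> s (\<Sum>i\<in>I. f i) = (\<Sum>i\<in>I. \<beta> s (f i))"
  unfolding bilinear_form_def using real_vector.linear_sum[of "\<beta> s"] by blast
lemma bil_scale_left: "bilinear_form \<beta> \<Longrightarrow> \<beta> (c *\<^sub>R s) t = c * \<beta> s t"
  unfolding bilinear_form_def using real_vector.linear_scale[of "\<lambda>s. \<beta> s t"] by fastforce
lemma bil_scale_right: "bilinear_form \<beta> \<Longrightarrow> \<beta> s (c *\<^sub>R t) = c * \<beta> s t"
  unfolding bilinear_form_def using real_vector.linear_scale[of "\<beta> s"] by fastforce
lemma bil_add_left: "bilinear_form \<beta> \<Longrightarrow> \<beta> (s + s') t = \<beta> s t + \<beta> s' t"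
  unfolding bilinear_form_def using real_vector.linear_add[of "\<lambda>s. \<beta> s t"] by fastforce
lemma bil_add_right: "bilinear_form \<beta> \<Longrightarrow> \<beta> s (t + t') = \<beta> s t + \<beta> s t'"
  unfolding bilinear_form_def using real_vector.linear_add[of "\<beta> s"] by fastforce

locale cmod =
  fixes p q :: nat and \<rho> :: "mv \<Rightarrow> 'w::real_vector \<Rightarrow> 'w"
  assumes md: "cl0_module p q \<rho>" and p3: "p mod 4 = 3"
begin

lemma rho_one: "\<rho> cl_one = id" using md unfolding cl0_module_def by simp
lemma rho_lin: "x \<in> cl_even p q \<Longrightarrow> linear (\<rho> x)" using md unfolding cl0_module_def by simp
lemma rho_add: "x \<in> cl_even p q \<Longrightarrow> y \<in> cl_even p q \<Longrightarrow> \<rho> (\<lambda>A. x A + y A) = (\<lambda>w. \<rho> x w + \<rho> y w)"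
  using md unfolding cl0_module_def by simp
lemma rho_scale: "x \<in> cl_even p q \<Longrightarrow> \<rho> (\<lambda>A. c * x A) = (\<lambda>w. c *\<^sub>R \<rho> x w)"
  using md unfolding cl0_module_def by simp
lemma rho_mult: "x \<in> cl_even p q \<Longrightarrow> y \<in> cl_even p q \<Longrightarrow> \<rho> (cl_mult p q x y) = \<rho> x \<circ> \<rho> y"
  using md unfolding cl0_module_def by simp

lemma rho_zero: "\<rho> (\<lambda>A. 0) = (\<lambda>w. 0)"
  using rho_scale[OF cl_one_even, of 0] by simp

lemma rho_sum:
  assumes "finite I" "\<And>i. i \<in> I \<Longrightarrow> f i \<in> cl_even p q"
  shows "\<rho> (\<lambda>A. \<Sum>i\<in>I. f i A) = (\<lambda>w. \<Sum>i\<in>I. \<rho> (f i) w)"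
  using assms
proof (induction I rule: finite_induct)
  case empty then show ?case by (simp add: rho_zero)
next
  case (insert i I)
  have e: "(\<lambda>A. \<Sum>j\<in>insert i I. f j A) = (\<lambda>A. f i A + (\<Sum>j\<in>I. f j A))" using insert by simp
  have "(\<lambda>A. \<Sum>j\<in>I. f j A) \<in> cl_even p q" using insert by (intro even_sum) auto
  then show ?case unfolding e using insert by (subst rho_add) auto
qed

lemma rho_even_expand:
  assumes "x \<in> cl_even p q"
  shows "\<rho> x w = (\<Sum>A\<in>Ev p q. x A *\<^sub>R \<rho> (cl_blade A) w)"
proof -
  have "\<rho> x = \<rho> (\<lambda>C. \<Sum>A\<in>Ev p q. x A * cl_blade A C)" using even_expand[OF assms] by simp
  also have "\<dots> = (\<lambda>w. \<Sum>A\<in>Ev p q. \<rho> (\<lambda>C. x A * cl_blade A C) w)"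
    by (intro rho_sum Ev_finite even_scale Ev_blade)
  also have "\<dots> = (\<lambda>w. \<Sum>A\<in>Ev p q. x A *\<^sub>R \<rho> (cl_blade A) w)"
    by (intro ext sum.cong refl) (simp add: rho_scale Ev_blade)
  finally show ?thesis by simp
qed

lemma rho_blade_mult:
  assumes "A \<in> Ev p q" "B \<in> Ev p q"
  shows "\<rho> (cl_blade A) (\<rho> (cl_blade B) w) = blade_sign p A B *\<^sub>R \<rho> (cl_blade (sd A B)) w"
proof -
  have s: "A \<subseteq> {0..<p+q}" "B \<subseteq> {0..<p+q}" using assms by (auto simp: Ev_def)
  have "\<rho> (cl_blade A) (\<rho> (cl_blade B) w) = \<rho> (cl_mult p q (cl_blade A) (cl_blade B)) w"
    using rho_mult[OF Ev_blade Ev_blade, OF assms] by simp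
  also have "\<dots> = blade_sign p A B *\<^sub>R \<rho> (cl_blade (sd A B)) w"
    unfolding cl_blade_mult[OF s] using rho_scale[OF Ev_blade[OF Ev_sd[OF assms]]] by simp
  finally show ?thesis .
qed

lemma rho_blade_inv:
  assumes "A \<in> Ev p q"
  shows "\<rho> (cl_blade A) (tau p A *\<^sub>R \<rho> (cl_blade A) w) = w"
proof -
  have f: "finite A" using assms by (auto simp: Ev_def intro: finite_subset)
  have "\<rho> (cl_blade A) (tau p A *\<^sub>R \<rho> (cl_blade A) w) = tau p A *\<^sub>R \<rho> (cl_blade A) (\<rho> (cl_blade A) w)"
    using rho_lin[OF Ev_blade[OF assms]] by (simp add: linear_scale)
  also have "\<dots> = (tau p A * tau p A) *\<^sub>R \<rho> (cl_blade {}) w"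
    unfolding rho_blade_mult[OF assms assms] by (simp add: tau_def)
  also have "\<dots> = w" using tau_sq[OF f] by (simp add: cl_one_blade[symmetric] rho_one)
  finally show ?thesis .
qed

lemma inv_even:
  assumes U: "subspace U" and inv: "\<And>A u. A \<in> Ev p q \<Longrightarrow> u \<in> U \<Longrightarrow> \<rho> (cl_blade A) u \<in> U"
    and x: "x \<in> cl_even p q" and u: "u \<in> U"
  shows "\<rho> x u \<in> U"
  unfolding rho_even_expand[OF x]
  by (intro real_vector.subspace_sum[OF U] real_vector.subspace_scale[OF U] inv u)

lemma blade_rho_Khat:
  assumes "A \<in> Ev p q"
  shows "\<exists>k\<in>Khat p q. \<exists>c\<in>{1,-1}. \<rho> (cl_blade A) = (\<lambda>w. c *\<^sub>R \<rho> k w)"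
proof -
  obtain k c where k: "k \<in> Khat p q" "c \<in> {1,-1}" "cl_blade A = (\<lambda>C. c * k C)"
    using blade_Khat[OF p3] assms unfolding Ev_def by blast
  have "k \<in> cl_even p q" using Khat_even[OF p3 k(1)] .
  then have "\<rho> (cl_blade A) = (\<lambda>w. c *\<^sub>R \<rho> k w)" unfolding k(3) by (rule rho_scale)
  then show ?thesis using k by blast
qed

lemma part1: "irreducible_under (cl_even p q) \<rho> \<longleftrightarrow> irreducible_under (Khat p q) \<rho>"
proof
  assume irr: "irreducible_under (cl_even p q) \<rho>"
  show "irreducible_under (Khat p q) \<rho>"
    unfolding irreducible_under_def
  proof (intro conjI allI impI)
    show "\<exists>w::'w. w \<noteq> 0" using irr unfolding irreducible_under_def by blast
  next
    fix U :: "'w set" assume h: "subspace U \<and> (\<forall>x\<in>Khat p q. \<forall>u\<in>U. \<rho> x u \<in> U)"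
    have "\<forall>x\<in>cl_even p q. \<forall>u\<in>U. \<rho> x u \<in> U"
    proof (intro ballI, rule inv_even)
      fix A u assume A: "A \<in> Ev p q" and u: "u \<in> U"
      obtain k c where k: "k \<in> Khat p q" "\<rho> (cl_blade A) = (\<lambda>w. c *\<^sub>R \<rho> k w)"
        using blade_rho_Khat[OF A] by blast
      show "\<rho> (cl_blade A) u \<in> U" unfolding k(2) using h k(1) u by (auto intro: real_vector.subspace_scale)
    qed (use h in auto)
    then show "U = {0} \<or> U = UNIV" using irr h unfolding irreducible_under_def by blast
  qed
next
  assume irr: "irreducible_under (Khat p q) \<rho>"
  show "irreducible_under (cl_even p q) \<rho>"
    unfolding irreducible_under_def
  proof (intro conjI allI impI)
    show "\<exists>w::'w. w \<noteq> 0" using irr unfolding irreducible_under_def by blast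
  next
    fix U :: "'w set" assume h: "subspace U \<and> (\<forall>x\<in>cl_even p q. \<forall>u\<in>U. \<rho> x u \<in> U)"
    then have "\<forall>x\<in>Khat p q. \<forall>u\<in>U. \<rho> x u \<in> U" using Khat_even[OF p3] by blast
    then show "U = {0} \<or> U = UNIV" using irr h unfolding irreducible_under_def by blast
  qed
qed

lemma fin_dim:
  assumes irr: "irreducible_under (cl_even p q) \<rho>"
  shows "\<exists>B::'w set. finite B \<and> span B = UNIV"
proof -
  obtain w0 :: 'w where w0: "w0 \<noteq> 0" using irr unfolding irreducible_under_def by blast
  define G where "G = (\<lambda>A. \<rho> (cl_blade A) w0) ` Ev p q"
  have fG: "finite G" unfolding G_def using Ev_finite by simp
  have sub: "subspace (span G)" by (rule real_vector.subspace_span)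
  have inv: "\<forall>x\<in>cl_even p q. \<forall>u\<in>span G. \<rho> x u \<in> span G"
  proof (intro ballI, rule inv_even[OF sub])
    fix A u assume A: "A \<in> Ev p q" and u: "u \<in> span G"
    have lin: "linear (\<rho> (cl_blade A))" by (rule rho_lin[OF Ev_blade[OF A]])
    have "\<rho> (cl_blade A) ` G \<subseteq> span G"
    proof
      fix v assume "v \<in> \<rho> (cl_blade A) ` G"
      then obtain B where B: "B \<in> Ev p q" "v = \<rho> (cl_blade A) (\<rho> (cl_blade B) w0)" unfolding G_def by auto
      then have "v = blade_sign p A B *\<^sub>R \<rho> (cl_blade (sd A B)) w0" using rho_blade_mult[OF A] by simp
      moreover have "\<rho> (cl_blade (sd A B)) w0 \<in> G" unfolding G_def using Ev_sd[OF A B(1)] by blast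
      ultimately show "v \<in> span G" by (simp add: real_vector.span_base real_vector.span_scale)
    qed
    then have "span (\<rho> (cl_blade A) ` G) \<subseteq> span G" by (simp add: real_vector.span_minimal)
    then show "\<rho> (cl_blade A) u \<in> span G" using span_linear_image[OF lin, of G] u by blast
  qed
  have "w0 \<in> span G"
  proof -
    have "{} \<in> Ev p q" by (simp add: Ev_def)
    moreover have "\<rho> (cl_blade {}) w0 = w0" by (simp add: cl_one_blade[symmetric] rho_one)
    ultimately have "w0 \<in> G" unfolding G_def by force
    then show ?thesis by (rule real_vector.span_base)
  qed
  then have "span G \<noteq> {0}" using w0 by blast
  then have "span G = UNIV" using irr sub inv unfolding irreducible_under_def by blast
  then show ?thesis using fG by blast
qed

lemma blade_inv_Khat:
  assumes bil: "bilinear_form \<beta>"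
    and binv: "\<And>A s t. A \<in> Ev p q \<Longrightarrow> \<beta> (\<rho> (cl_blade A) s) (\<rho> (cl_blade A) t) = \<beta> s t"
  shows "invariant_form (Khat p q) \<rho> \<beta>"
proof -
  have l1: "\<And>t. linear (\<lambda>s. \<beta> s t)" and l2: "\<And>s. linear (\<beta> s)" using bil unfolding bilinear_form_def by auto
  have adj_blade: "\<beta> (\<rho> (cl_blade A) s) t = \<beta> s (tau p A *\<^sub>R \<rho> (cl_blade A) t)" if A: "A \<in> Ev p q" for A s t
  proof -
    have "\<beta> (\<rho> (cl_blade A) s) t = \<beta> (\<rho> (cl_blade A) s) (\<rho> (cl_blade A) (tau p A *\<^sub>R \<rho> (cl_blade A) t))"
      by (simp add: rho_blade_inv[OF A])
    also have "\<dots> = \<beta> s (tau p A *\<^sub>R \<rho> (cl_blade A) t)" by (rule binv[OF A])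
    finally show ?thesis .
  qed
  have adj: "\<beta> (\<rho> x s) t = \<beta> s (\<rho> (star p x) t)" if x: "x \<in> cl_even p q" for x s t
  proof -
    have sx: "star p x \<in> cl_even p q" by (rule star_even[OF x])
    have "\<beta> (\<rho> x s) t = (\<Sum>A\<in>Ev p q. x A * \<beta> (\<rho> (cl_blade A) s) t)"
      unfolding rho_even_expand[OF x] by (simp add: bil_sum_left[OF bil] bil_scale_left[OF bil])
    also have "\<dots> = (\<Sum>A\<in>Ev p q. x A * \<beta> s (tau p A *\<^sub>R \<rho> (cl_blade A) t))"
      by (intro sum.cong refl) (simp add: adj_blade)
    also have "\<dots> = \<beta> s (\<Sum>A\<in>Ev p q. (tau p A * x A) *\<^sub>R \<rho> (cl_blade A) t)"
      by (simp add: bil_sum_right[OF bil] bil_scale_right[OF bil] ac_simps)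
    also have "\<dots> = \<beta> s (\<rho> (star p x) t)"
      unfolding rho_even_expand[OF sx] by (simp add: star_def)
    finally show ?thesis .
  qed
  show ?thesis unfolding invariant_form_def
  proof (intro ballI allI)
    fix k s t assume k: "k \<in> Khat p q"
    have ke: "k \<in> cl_even p q" by (rule Khat_even[OF p3 k])
    have "\<beta> (\<rho> k s) (\<rho> k t) = \<beta> s (\<rho> (star p k) (\<rho> k t))" by (rule adj[OF ke])
    also have "\<rho> (star p k) (\<rho> k t) = \<rho> (cl_mult p q (star p k) k) t"
      using rho_mult[OF star_even[OF ke] ke] by simp
    also have "\<dots> = t" unfolding Khat_star[OF p3 k] rho_one by simp
    finally show "\<beta> (\<rho> k s) (\<rho> k t) = \<beta> s t" .
  qed
qed

lemma Khat_inv_blade: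
  assumes bil: "bilinear_form \<beta>" and inv: "invariant_form (Khat p q) \<rho> \<beta>" and A: "A \<in> Ev p q"
  shows "\<beta> (\<rho> (cl_blade A) s) (\<rho> (cl_blade A) t) = \<beta> s t"
proof -
  have l1: "\<And>t. linear (\<lambda>s. \<beta> s t)" and l2: "\<And>s. linear (\<beta> s)" using bil unfolding bilinear_form_def by auto
  obtain k c where k: "k \<in> Khat p q" "c \<in> {1,-1}" "\<rho> (cl_blade A) = (\<lambda>w. c *\<^sub>R \<rho> k w)"
    using blade_rho_Khat[OF A] by blast
  have "\<beta> (\<rho> (cl_blade A) s) (\<rho> (cl_blade A) t) = (c * c) * \<beta> (\<rho> k s) (\<rho> k t)"
    unfolding k(3) by (simp add: bil_scale_left[OF bil] bil_scale_right[OF bil])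
  also have "\<dots> = \<beta> s t" using k(1,2) inv unfolding invariant_form_def by auto
  finally show ?thesis .
qed

end

lemma basis_exists_fin:
  assumes "finite G" "span G = (UNIV :: 'w::real_vector set)"
  shows "\<exists>Bs::'w set. finite Bs \<and> independent Bs \<and> span Bs = UNIV"
proof -
  obtain Bs :: "'w set" where Bs0: "Bs \<subseteq> UNIV" and Bs: "independent Bs" "UNIV \<subseteq> span Bs"
    by (rule real_vector.maximal_independent_subset[of UNIV])
  have "Bs \<subseteq> span G" using assms(2) by simp
  then have "finite Bs" using real_vector.independent_span_bound[OF assms(1) Bs(1)] by blast
  moreover have "span Bs = UNIV" using Bs(2) by blast
  ultimately show ?thesis using Bs(1) by blast
qed

lemma lin_cmul_real: "linear (f :: 'a::real_vector \<Rightarrow> real) \<Longrightarrow> linear (\<lambda>x. c * f x)"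
  by (rule linearI) (simp_all add: real_vector.linear_add real_vector.linear_scale algebra_simps)

definition g0 :: "'w::real_vector set \<Rightarrow> 'w \<Rightarrow> 'w \<Rightarrow> real" where
  "g0 Bs s t = (\<Sum>b\<in>Bs. representation Bs s b * representation Bs t b)"

lemma g0_bil:
  assumes "independent Bs" "span Bs = UNIV"
  shows "bilinear_form (g0 Bs)"
proof -
  have sp: "\<And>v. v \<in> span Bs" using assms by simp
  have l: "linear (\<lambda>s. representation Bs s b)" for b
    by (rule linearI) (simp_all add: real_vector.representation_add[OF assms(1) sp sp] real_vector.representation_scale[OF assms(1) sp])
  show ?thesis unfolding bilinear_form_def g0_def
  proof (intro conjI allI)
    fix s show "linear (\<lambda>t. \<Sum>b\<in>Bs. representation Bs s b * representation Bs t b)"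
      by (intro linear_compose_sum ballI lin_cmul_real l)
  next
    fix t show "linear (\<lambda>s. \<Sum>b\<in>Bs. representation Bs s b * representation Bs t b)"
      by (subst mult.commute, intro linear_compose_sum ballI lin_cmul_real l)
  qed
qed

lemma g0_sym: "g0 Bs s t = g0 Bs t s"
  unfolding g0_def by (simp add: mult.commute)

lemma g0_nonneg: "g0 Bs s s \<ge> 0"
  unfolding g0_def by (intro sum_nonneg) simp

lemma g0_pos:
  assumes "finite Bs" "independent Bs" "span Bs = UNIV" "s \<noteq> 0"
  shows "g0 Bs s s > 0"
proof -
  have "\<exists>b\<in>Bs. representation Bs s b \<noteq> 0"
  proof (rule ccontr)
    assume "\<not> ?thesis"
    then have z: "\<forall>b. representation Bs s b = 0" using real_vector.representation_ne_zero by blast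
    have "s = (\<Sum>b | representation Bs s b \<noteq> 0. representation Bs s b *\<^sub>R b)"
      using real_vector.sum_nonzero_representation_eq[OF assms(2)] assms(3) by simp
    also have "\<dots> = 0" using z by simp
    finally show False using assms(4) by simp
  qed
  then obtain b where b: "b \<in> Bs" "representation Bs s b \<noteq> 0" by blast
  show ?thesis unfolding g0_def
    by (rule sum_pos2[OF assms(1) b(1)]) (use b in \<open>auto simp: zero_less_mult_iff\<close>)
qed

context cmod
begin

definition gform :: "'w set \<Rightarrow> 'w \<Rightarrow> 'w \<Rightarrow> real" where
  "gform Bs s t = (\<Sum>A\<in>Ev p q. g0 Bs (\<rho> (cl_blade A) s) (\<rho> (cl_blade A) t))"

lemma gform_bil:
  assumes "independent Bs" "span Bs = UNIV"
  shows "bilinear_form (gform Bs)"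
proof -
  have b: "bilinear_form (g0 Bs)" by (rule g0_bil[OF assms])
  have l1: "linear (\<lambda>s. g0 Bs s t)" for t using b unfolding bilinear_form_def by auto
  have l2: "linear (g0 Bs s)" for s using b unfolding bilinear_form_def by auto
  have lr: "A \<in> Ev p q \<Longrightarrow> linear (\<rho> (cl_blade A))" for A by (rule rho_lin[OF Ev_blade])
  show ?thesis unfolding bilinear_form_def gform_def
  proof (intro conjI allI)
    fix s show "linear (\<lambda>t. \<Sum>A\<in>Ev p q. g0 Bs (\<rho> (cl_blade A) s) (\<rho> (cl_blade A) t))"
      by (intro linear_compose_sum) (auto intro: linear_compose[OF lr l2, unfolded comp_def])
  next
    fix t show "linear (\<lambda>s. \<Sum>A\<in>Ev p q. g0 Bs (\<rho> (cl_blade A) s) (\<rho> (cl_blade A) t))"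
      by (intro linear_compose_sum) (auto intro: linear_compose[OF lr l1, unfolded comp_def])
  qed
qed

lemma gform_sym: "sym_form (gform Bs)"
  unfolding sym_form_def gform_def by (simp add: g0_sym)

lemma gform_pos:
  assumes "finite Bs" "independent Bs" "span Bs = UNIV"
  shows "pos_def (gform Bs)"
  unfolding pos_def_def
proof (intro allI impI)
  fix s :: 'w assume s: "s \<noteq> 0"
  have e: "{} \<in> Ev p q" by (simp add: Ev_def)
  have "g0 Bs (\<rho> (cl_blade {}) s) (\<rho> (cl_blade {}) s) > 0"
    using g0_pos[OF assms s] by (simp add: cl_one_blade[symmetric] rho_one)
  then show "gform Bs s s > 0" unfolding gform_def
    by (intro sum_pos2[OF Ev_finite e]) (auto simp: g0_nonneg)
qed

lemma gform_blade_inv: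
  assumes "independent Bs" "span Bs = UNIV" and B: "B \<in> Ev p q"
  shows "gform Bs (\<rho> (cl_blade B) s) (\<rho> (cl_blade B) t) = gform Bs s t"
proof -
  have b: "bilinear_form (g0 Bs)" by (rule g0_bil[OF assms(1,2)])
  have "gform Bs (\<rho> (cl_blade B) s) (\<rho> (cl_blade B) t) =
      (\<Sum>A\<in>Ev p q. g0 Bs (\<rho> (cl_blade (sd A B)) s) (\<rho> (cl_blade (sd A B)) t))"
    unfolding gform_def
  proof (intro sum.cong refl)
    fix A assume A: "A \<in> Ev p q"
    have f: "finite A" "finite B" using A B by (auto simp: Ev_def intro: finite_subset)
    show "g0 Bs (\<rho> (cl_blade A) (\<rho> (cl_blade B) s)) (\<rho> (cl_blade A) (\<rho> (cl_blade B) t)) =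
        g0 Bs (\<rho> (cl_blade (sd A B)) s) (\<rho> (cl_blade (sd A B)) t)"
      unfolding rho_blade_mult[OF A B] bil_scale_left[OF b] bil_scale_right[OF b]
      using blade_sign_sq[OF f, of p] by (simp add: mult.assoc[symmetric])
  qed
  also have "\<dots> = gform Bs s t" unfolding gform_def
    by (rule sum.reindex_bij_witness[of _ "\<lambda>A. sd A B" "\<lambda>A. sd A B"]) (auto intro: Ev_sd[OF _ B])
  finally show ?thesis .
qed

lemma exists_g:
  assumes irr: "irreducible_under (cl_even p q) \<rho>"
  shows "\<exists>Bs. finite Bs \<and> independent Bs \<and> span Bs = UNIV \<and>
     bilinear_form (gform Bs) \<and> sym_form (gform Bs) \<and> invariant_form (Khat p q) \<rho> (gform Bs) \<and> pos_def (gform Bs)"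
proof -
  obtain G :: "'w set" where "finite G" "span G = UNIV" using fin_dim[OF irr] by blast
  then obtain Bs :: "'w set" where Bs: "finite Bs" "independent Bs" "span Bs = UNIV" using basis_exists_fin by blast
  have "invariant_form (Khat p q) \<rho> (gform Bs)"
    by (rule blade_inv_Khat[OF gform_bil[OF Bs(2,3)]]) (rule gform_blade_inv[OF Bs(2,3)])
  then show ?thesis using Bs gform_bil[OF Bs(2,3)] gform_sym gform_pos[OF Bs] by blast
qed

end

definition peval :: "real poly \<Rightarrow> ('w::real_vector \<Rightarrow> 'w) \<Rightarrow> 'w \<Rightarrow> 'w" where
  "peval f M v = (\<Sum>i\<le>degree f. coeff f i *\<^sub>R (M ^^ i) v)"

lemma peval_bound:
  assumes "degree f \<le> N"
  shows "peval f M v = (\<Sum>i\<le>N. coeff f i *\<^sub>R (M ^^ i) v)"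
proof -
  have "(\<Sum>i\<le>N. coeff f i *\<^sub>R (M ^^ i) v) = (\<Sum>i\<le>degree f. coeff f i *\<^sub>R (M ^^ i) v)"
    using assms by (intro sum.mono_neutral_right) (auto simp: coeff_eq_0)
  then show ?thesis unfolding peval_def by simp
qed

lemma peval_add: "peval (f + h) M v = peval f M v + peval h M v"
proof -
  let ?N = "max (degree f) (degree h)"
  have "degree (f + h) \<le> ?N" by (rule degree_add_le) auto
  then show ?thesis
    by (simp add: peval_bound[of _ ?N] sum.distrib scaleR_add_left)
qed

lemma peval_smult: "peval (smult c f) M v = c *\<^sub>R peval f M v"
  by (simp add: peval_bound[of _ "degree f"] scaleR_sum_right)

lemma peval_pCons:
  assumes "linear M"
  shows "peval (pCons a f) M v = a *\<^sub>R v + M (peval f M v)"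
proof -
  let ?N = "degree f"
  have d: "degree (pCons a f) \<le> Suc ?N" by (simp add: degree_pCons_le)
  have "peval (pCons a f) M v = (\<Sum>i\<le>Suc ?N. coeff (pCons a f) i *\<^sub>R (M ^^ i) v)"
    by (rule peval_bound[OF d])
  also have "\<dots> = a *\<^sub>R v + (\<Sum>i\<le>?N. coeff f i *\<^sub>R (M ^^ Suc i) v)"
    by (subst sum.atMost_Suc_shift) simp
  also have "(\<Sum>i\<le>?N. coeff f i *\<^sub>R (M ^^ Suc i) v) = M (peval f M v)"
    unfolding peval_def using assms
    by (simp add: real_vector.linear_sum real_vector.linear_scale)
  finally show ?thesis .
qed

lemma peval_const: "peval [:c:] M v = c *\<^sub>R v"
  by (simp add: peval_def)

lemma peval_zero: "peval 0 M v = 0"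
  by (simp add: peval_def)

lemma peval_mult:
  assumes "linear M"
  shows "peval (f * h) M v = peval f M (peval h M v)"
proof (induction f arbitrary: v rule: pCons_induct)
  case 0 then show ?case by (simp add: peval_zero)
next
  case (pCons a f)
  have "peval (pCons a f * h) M v = peval (smult a h + pCons 0 (f * h)) M v" by simp
  also have "\<dots> = a *\<^sub>R peval h M v + M (peval f M (peval h M v))"
    by (simp add: peval_add peval_smult peval_pCons[OF assms] pCons.IH)
  also have "\<dots> = peval (pCons a f) M (peval h M v)" by (simp add: peval_pCons[OF assms])
  finally show ?case .
qed

lemma peval_linear:
  assumes "linear M"
  shows "linear (peval f M)"
proof -
  have li: "linear (M ^^ i)" for i
  proof (induction i)
    case 0 then show ?case by (simp add: linear_id[unfolded id_def])
  next
    case (Suc i)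
    have "linear (M \<circ> (M ^^ i))" by (rule linear_compose[OF Suc assms])
    then show ?case by (simp add: comp_def)
  qed
  have ls: "linear L \<Longrightarrow> linear (\<lambda>v. c *\<^sub>R L v)" for L :: "'a \<Rightarrow> 'a" and c
    by (rule linearI) (simp_all add: real_vector.linear_add real_vector.linear_scale scaleR_add_right)
  show ?thesis unfolding peval_def
    by (intro linear_compose_sum ballI ls li)
qed

definition E :: "real poly \<Rightarrow> complex \<Rightarrow> complex" where
  "E f z = poly (map_poly complex_of_real f) z"

lemma E_pCons: "E (pCons a f) z = of_real a + z * E f z"
  unfolding E_def by (simp add: map_poly_pCons)

lemma E_zero: "E 0 z = 0" unfolding E_def by simp

lemma E_add: "E (f + h) z = E f z + E h z"
proof (induction f arbitrary: h rule: pCons_induct)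
  case 0 then show ?case by (simp add: E_zero)
next
  case (pCons a f)
  show ?case
  proof (cases h rule: pCons_cases)
    case (pCons b h')
    have "E (f + h') z = E f z + E h' z" by (rule pCons.IH)
    then show ?thesis using pCons by (simp add: E_pCons algebra_simps)
  qed
qed

lemma E_smult: "E (smult c f) z = of_real c * E f z"
  unfolding E_def by (simp add: map_poly_smult)

lemma E_mult: "E (f * h) z = E f z * E h z"
proof (induction f rule: pCons_induct)
  case 0 then show ?case by (simp add: E_zero)
next
  case (pCons a f)
  have "E (pCons a f * h) z = E (smult a h + pCons 0 (f * h)) z" by simp
  also have "\<dots> = of_real a * E h z + z * (E f z * E h z)"
    by (simp add: E_add E_smult E_pCons pCons.IH)
  also have "\<dots> = E (pCons a f) z * E h z" by (simp add: E_pCons algebra_simps)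
  finally show ?case .
qed

lemma E_real: "E f (of_real x) = of_real (poly f x)"
  by (induction f rule: pCons_induct) (simp_all add: E_zero E_pCons)

lemma degree_map_real: "degree (map_poly complex_of_real f) = degree f"
  by (rule degree_map_poly) simp

lemma E_root_exists:
  assumes "degree f > 0"
  shows "\<exists>z. E f z = 0"
proof -
  have "\<not> constant (poly (map_poly complex_of_real f))"
    using assms by (simp add: constant_degree degree_map_real)
  then show ?thesis unfolding E_def using fundamental_theorem_of_algebra by blast
qed

lemma deg1_form:
  assumes "degree (r::real poly) \<le> 1"
  shows "r = [:coeff r 0, coeff r 1:]"
proof (rule poly_eqI)
  fix n show "coeff r n = coeff [:coeff r 0, coeff r 1:] n"
    using assms by (cases n) (auto simp: coeff_pCons coeff_eq_0 split: nat.splits)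
qed

lemma quad_factor:
  assumes "E f z = 0" "Im z \<noteq> 0"
  shows "[:Re z ^ 2 + Im z ^ 2, - 2 * Re z, 1:] dvd f"
proof -
  let ?Q = "[:Re z ^ 2 + Im z ^ 2, - 2 * Re z, 1:]"
  have Q0: "?Q \<noteq> 0" by simp
  have EQ: "E ?Q z = 0"
    by (simp add: E_pCons E_zero complex_eq_iff power2_eq_square algebra_simps)
  define r where "r = f mod ?Q"
  have dec: "f = (f div ?Q) * ?Q + r" unfolding r_def by (rule div_mult_mod_eq[symmetric])
  have Er: "E r z = 0"
  proof -
    have "E f z = E (f div ?Q) z * E ?Q z + E r z" by (subst dec) (simp only: E_add E_mult)
    then show ?thesis using assms(1) EQ by simp
  qed
  have "r = 0"
  proof (rule ccontr)
    assume rn: "r \<noteq> 0"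
    have "degree r < degree ?Q" using degree_mod_less[OF Q0, of f] rn unfolding r_def by auto
    then have "degree r \<le> 1" by simp
    then have rf: "r = [:coeff r 0, coeff r 1:]" by (rule deg1_form)
    have "E r z = of_real (coeff r 0) + z * of_real (coeff r 1)"
      by (subst rf) (simp add: E_pCons E_zero)
    then have "of_real (coeff r 0) + z * of_real (coeff r 1) = 0" using Er by simp
    then have "coeff r 1 * Im z = 0" "coeff r 0 + Re z * coeff r 1 = 0"
      by (auto simp: complex_eq_iff)
    then have "coeff r 1 = 0" "coeff r 0 = 0" using assms(2) by auto
    then have "r = 0" using rf by simp
    with rn show False by simp
  qed
  then show ?thesis unfolding r_def by (simp add: mod_eq_0_iff_dvd)
qed

lemma bil_zero_left: "bilinear_form g \<Longrightarrow> g 0 t = 0"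
  using bil_scale_left[of g 0] by (metis scale_zero_left mult_zero_left)

lemma bil_diff_left: "bilinear_form g \<Longrightarrow> g (s - s') t = g s t - g s' t"
  using bil_add_left[of g s "(-1) *\<^sub>R s'" t] bil_scale_left[of g "-1" s' t] by simp
lemma bil_diff_right: "bilinear_form g \<Longrightarrow> g s (t - t') = g s t - g s t'"
  using bil_add_right[of g s t "(-1) *\<^sub>R t'"] bil_scale_right[of g s "-1" t'] by simp

lemma psd_of_pd: "bilinear_form g \<Longrightarrow> pos_def g \<Longrightarrow> g u u \<ge> 0"
  unfolding pos_def_def by (cases "u = 0") (auto simp: bil_zero_left less_imp_le)

lemma inj_all:
  fixes M :: "'w::real_vector \<Rightarrow> 'w" and g :: "'w \<Rightarrow> 'w \<Rightarrow> real"
  assumes lin: "linear M" and bil: "bilinear_form g" and sym: "sym_form g" and pd: "pos_def g"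
    and adj: "\<And>s t. g (M s) t = g s (M t)"
    and noeig0: "\<forall>c v. M v = c *\<^sub>R v \<longrightarrow> v = 0"
  shows "f \<noteq> 0 \<Longrightarrow> peval f M v = 0 \<Longrightarrow> v = 0"
proof (induction "degree f" arbitrary: f v rule: less_induct)
  have noeig: "\<And>c v. M v = c *\<^sub>R v \<Longrightarrow> v = 0" using noeig0 by blast
  case less
  show ?case
  proof (cases "degree f = 0")
    case True
    then have f: "f = [:coeff f 0:]"
      by (intro poly_eqI) (auto simp: coeff_pCons coeff_eq_0 split: nat.splits)
    then have "coeff f 0 \<noteq> 0" using less.prems(1) by (metis pCons_eq_0_iff)
    moreover have "coeff f 0 *\<^sub>R v = 0" using less.prems(2) f peval_const by metis
    ultimately show ?thesis by simp
  next
    case False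
    then obtain z where z: "E f z = 0" using E_root_exists by blast
    show ?thesis
    proof (cases "Im z = 0")
      case True
      define r where "r = Re z"
      have "z = of_real r" using True unfolding r_def by (simp add: complex_eq_iff)
      then have "poly f r = 0" using z E_real[of f r] by simp
      then have "[:-r, 1:] dvd f" by (simp add: poly_eq_0_iff_dvd)
      then obtain h where h: "f = [:-r, 1:] * h" by (elim dvdE)
      have hn: "h \<noteq> 0" using h less.prems(1) by auto
      have "degree f = degree [:-r, 1:] + degree h" unfolding h by (rule degree_mult_eq) (use hn in auto)
      then have dh: "degree h < degree f" by simp
      define w where "w = peval h M v"
      have "peval f M v = peval [:-r, 1:] M w" unfolding w_def h by (rule peval_mult[OF lin])
      also have "\<dots> = (-r) *\<^sub>R w + M w" by (simp add: peval_pCons[OF lin] peval_zero real_vector.linear_0[OF lin])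
      finally have "M w = r *\<^sub>R w" using less.prems(2) by (simp add: algebra_simps)
      then have "w = 0" by (rule noeig)
      then show ?thesis using less.hyps[OF dh hn] unfolding w_def by blast
    next
      case False
      define x where "x = Re z"
      define y where "y = Im z"
      let ?Q = "[:x ^ 2 + y ^ 2, - 2 * x, 1:]"
      have "?Q dvd f" using quad_factor[OF z False] unfolding x_def y_def .
      then obtain h where h: "f = ?Q * h" by (elim dvdE)
      have hn: "h \<noteq> 0" using h less.prems(1) by auto
      have "degree f = degree ?Q + degree h" unfolding h by (rule degree_mult_eq) (use hn in auto)
      then have dh: "degree h < degree f" by simp
      define w where "w = peval h M v"
      have "peval f M v = peval ?Q M w" unfolding w_def h by (rule peval_mult[OF lin])
      also have "\<dots> = (x ^ 2 + y ^ 2) *\<^sub>R w + (M (M w) - (2 * x) *\<^sub>R M w)"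
        by (simp add: peval_pCons[OF lin] peval_zero real_vector.linear_0[OF lin]
            real_vector.linear_add[OF lin] real_vector.linear_diff[OF lin] real_vector.linear_scale[OF lin] algebra_simps)
      finally have Qw: "(x ^ 2 + y ^ 2) *\<^sub>R w + (M (M w) - (2 * x) *\<^sub>R M w) = 0"
        using less.prems(2) by simp
      have "w = 0"
      proof (rule ccontr)
        assume wn: "w \<noteq> 0"
        define u where "u = M w - x *\<^sub>R w"
        have g1: "g (M (M w)) w = g (M w) (M w)" by (simp add: adj)
        have gs: "g w (M w) = g (M w) w" using sym unfolding sym_form_def by simp
        have guu: "g u u = g (M w) (M w) - 2 * x * g (M w) w + x ^ 2 * g w w"
          unfolding u_def bil_diff_left[OF bil] bil_diff_right[OF bil] bil_scale_left[OF bil] bil_scale_right[OF bil] gs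
          by (simp add: power2_eq_square algebra_simps)
        have "0 = g ((x ^ 2 + y ^ 2) *\<^sub>R w + (M (M w) - (2 * x) *\<^sub>R M w)) w"
          unfolding Qw by (simp add: bil_zero_left[OF bil])
        also have "\<dots> = (x ^ 2 + y ^ 2) * g w w - 2 * x * g (M w) w + g (M w) (M w)"
          unfolding bil_add_left[OF bil] bil_diff_left[OF bil] bil_scale_left[OF bil] g1 by simp
        also have "\<dots> = g u u + y ^ 2 * g w w" unfolding guu by (simp add: algebra_simps)
        finally have e: "g u u + y ^ 2 * g w w = 0" by simp
        have "g w w > 0" using pd wn unfolding pos_def_def by blast
        moreover have "y ^ 2 > 0" using False unfolding y_def by simp
        moreover have "g u u \<ge> 0" by (rule psd_of_pd[OF bil pd])
        ultimately have "g u u + y ^ 2 * g w w > 0" by (simp add: add_nonneg_pos)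
        with e show False by simp
      qed
      then show ?thesis using less.hyps[OF dh hn] unfolding w_def by blast
    qed
  qed
qed

lemma sum_single_gen:
  assumes "finite S" "b \<in> S" "\<And>x. x \<in> S \<Longrightarrow> x \<noteq> b \<Longrightarrow> f x = 0"
  shows "sum f S = f b"
proof -
  have "sum f S = f b + sum f (S - {b})" using assms by (simp add: sum.remove)
  also have "sum f (S - {b}) = 0" using assms by (intro sum.neutral) auto
  finally show ?thesis by simp
qed

lemma peval_monom: "peval (monom c k) M v = c *\<^sub>R (M ^^ k) v"
proof -
  have "peval (monom c k) M v = (\<Sum>i\<le>k. coeff (monom c k) i *\<^sub>R (M ^^ i) v)"
    by (rule peval_bound) (simp add: degree_monom_le)
  also have "\<dots> = coeff (monom c k) k *\<^sub>R (M ^^ k) v"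
    by (rule sum_single_gen) (auto simp: coeff_monom)
  finally show ?thesis by (simp add: coeff_monom)
qed

lemma peval_diff: "peval (f - h) M v = peval f M v - peval h M v"
proof -
  have e: "f - h = f + smult (-1) h" by simp
  show ?thesis unfolding e peval_add peval_smult by simp
qed

lemma poly_annih:
  fixes M :: "'w::real_vector \<Rightarrow> 'w" and Bs :: "'w set"
  assumes fin: "finite Bs" and sp: "span Bs = UNIV"
  shows "\<exists>f. f \<noteq> 0 \<and> peval f M w = 0"
proof -
  define N where "N = card Bs"
  define vs where "vs = (\<lambda>i. (M ^^ i) w)"
  show ?thesis
  proof (cases "inj_on vs {..N}")
    case False
    then obtain i j where ij: "i \<le> N" "j \<le> N" "i \<noteq> j" "vs i = vs j"
      unfolding inj_on_def by auto
    define f where "f = monom (1::real) i - monom 1 j"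
    have "coeff f i = 1" using ij by (simp add: f_def coeff_monom)
    then have "f \<noteq> 0" by auto
    moreover have "peval f M w = 0"
      unfolding f_def peval_diff peval_monom using ij by (simp add: vs_def)
    ultimately show ?thesis by blast
  next
    case True
    define S where "S = vs ` {..N}"
    have cS: "card S = Suc N" unfolding S_def using True by (simp add: card_image)
    have "\<not> independent S"
    proof
      assume "independent S"
      moreover have "S \<subseteq> span Bs" using sp by simp
      ultimately have "card S \<le> card Bs" using real_vector.independent_span_bound[OF fin] by blast
      then show False using cS unfolding N_def by simp
    qed
    then obtain T u where T: "finite T" "T \<subseteq> S" "\<exists>v\<in>T. u v \<noteq> 0" "(\<Sum>v\<in>T. u v *\<^sub>R v) = 0"
      unfolding real_vector.dependent_explicit by blast
    define c where "c = (\<lambda>i. if vs i \<in> T then u (vs i) else 0)"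
    define f where "f = (\<Sum>i\<le>N. monom (c i) i)"
    have cf: "coeff f k = (if k \<le> N then c k else 0)" for k
      unfolding f_def coeff_sum coeff_monom by (simp add: sum.delta)
    have df: "degree f \<le> N" by (rule degree_le) (simp add: cf)
    obtain v0 where v0: "v0 \<in> T" "u v0 \<noteq> 0" using T(3) by blast
    then obtain i0 where i0: "i0 \<le> N" "v0 = vs i0" using T(2) unfolding S_def by auto
    have "coeff f i0 \<noteq> 0" using i0 v0 by (simp add: cf c_def)
    then have fn: "f \<noteq> 0" by auto
    have "peval f M w = (\<Sum>i\<le>N. c i *\<^sub>R vs i)"
      unfolding peval_bound[OF df] cf vs_def by simp
    also have "\<dots> = (\<Sum>i\<le>N. if vs i \<in> T then u (vs i) *\<^sub>R vs i else 0)"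
      by (intro sum.cong refl) (simp add: c_def)
    also have "\<dots> = (\<Sum>i\<in>{i\<in>{..N}. vs i \<in> T}. u (vs i) *\<^sub>R vs i)"
      by (rule sum.inter_filter[symmetric]) simp
    also have "\<dots> = (\<Sum>v\<in>T. u v *\<^sub>R v)"
    proof -
      have inj: "inj_on vs {i\<in>{..N}. vs i \<in> T}" using True by (rule inj_on_subset) auto
      have im: "vs ` {i\<in>{..N}. vs i \<in> T} = T" using T(2) unfolding S_def by auto
      show ?thesis using sum.reindex[OF inj, of "\<lambda>v. u v *\<^sub>R v"] im by simp
    qed
    also have "\<dots> = 0" by (rule T(4))
    finally show ?thesis using fn by blast
  qed
qed

lemma sym_eigen:
  fixes M :: "'w::real_vector \<Rightarrow> 'w" and g :: "'w \<Rightarrow> 'w \<Rightarrow> real" and Bs :: "'w set"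
  assumes fin: "finite Bs" and sp: "span Bs = UNIV" and ne: "\<exists>w::'w. w \<noteq> 0"
    and lin: "linear M" and bil: "bilinear_form g" and sym: "sym_form g" and pd: "pos_def g"
    and adj: "\<And>s t. g (M s) t = g s (M t)"
  shows "\<exists>c v. v \<noteq> 0 \<and> M v = c *\<^sub>R v"
proof (rule ccontr)
  assume "\<not> ?thesis"
  then have noeig: "\<forall>c v. M v = c *\<^sub>R v \<longrightarrow> v = 0" by blast
  obtain w :: 'w where w: "w \<noteq> 0" using ne by blast
  obtain f where f: "f \<noteq> 0" "peval f M w = 0" using poly_annih[OF fin sp, of M w] by (elim exE conjE)
  have "w = 0" by (rule inj_all[OF lin bil sym pd adj noeig f(1) f(2)])
  with w show False by simp
qed

lemma lin_inj_surj:
  assumes a: "finite (Bs::'w::real_vector set)" "independent Bs" "span Bs = UNIV" "linear (f::'w\<Rightarrow>'w)" "inj f"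
  shows "surj f"
proof -
  interpret fd: finite_dimensional_vector_space "(*\<^sub>R)" Bs
    by unfold_locales (use a in \<open>auto simp: dependent_raw_def span_raw_def\<close>)
  show "surj f" by (rule fd.linear_inj_imp_surj) (use a in \<open>auto simp: linear_def real_scaleR_def[abs_def]\<close>)
qed

definition Rz :: "'w::real_vector set \<Rightarrow> ('w \<Rightarrow> 'w \<Rightarrow> real) \<Rightarrow> 'w \<Rightarrow> 'w" where
  "Rz Bs \<phi> t = (\<Sum>b\<in>Bs. \<phi> b t *\<^sub>R b)"

lemma Rz_linear:
  assumes "bilinear_form \<phi>"
  shows "linear (Rz Bs \<phi>)"
proof -
  have l: "linear (\<phi> b)" for b using assms unfolding bilinear_form_def by auto
  have "linear (\<lambda>t. \<phi> b t *\<^sub>R b)" for b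
    using linear_compose[OF l real_vector.linear_scale_left[of b]] by (simp add: comp_def)
  then show ?thesis unfolding Rz_def by (intro linear_compose_sum) auto
qed

lemma Rz_riesz:
  assumes fin: "finite Bs" and ind: "independent Bs" and sp: "span Bs = UNIV" and bil: "bilinear_form \<phi>"
  shows "g0 Bs s (Rz Bs \<phi> t) = \<phi> s t"
proof -
  have spv: "\<And>v. v \<in> span Bs" using sp by simp
  have rep: "representation Bs (Rz Bs \<phi> t) b = \<phi> b t" if b: "b \<in> Bs" for b
  proof -
    have "representation Bs (Rz Bs \<phi> t) = (\<lambda>b. \<Sum>b'\<in>Bs. representation Bs (\<phi> b' t *\<^sub>R b') b)"
      unfolding Rz_def by (rule real_vector.representation_sum[OF ind]) (simp add: spv)
    then have "representation Bs (Rz Bs \<phi> t) b = (\<Sum>b'\<in>Bs. \<phi> b' t * (if b = b' then 1 else 0))"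
      by (simp add: real_vector.representation_scale[OF ind] spv real_vector.representation_basis[OF ind])
    also have "\<dots> = \<phi> b t" using b fin by (simp add: if_distrib cong: if_cong)
    finally show ?thesis .
  qed
  have "g0 Bs s (Rz Bs \<phi> t) = (\<Sum>b\<in>Bs. representation Bs s b * \<phi> b t)"
    unfolding g0_def by (intro sum.cong refl) (simp add: rep)
  also have "\<dots> = \<phi> (\<Sum>b\<in>Bs. representation Bs s b *\<^sub>R b) t"
    by (simp add: bil_sum_left[OF bil] bil_scale_left[OF bil])
  also have "(\<Sum>b\<in>Bs. representation Bs s b *\<^sub>R b) = s"
    by (rule real_vector.sum_representation_eq[OF ind spv fin]) simp
  finally show ?thesis .
qed

context cmod
begin

lemma uniq:
  assumes irr: "irreducible_under (cl_even p q) \<rho>"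
    and fin: "finite Bs" and ind: "independent Bs" and sp: "span Bs = UNIV"
    and bil: "bilinear_form \<beta>" and sy: "sym_form \<beta>" and inv: "invariant_form (Khat p q) \<rho> \<beta>"
  shows "\<exists>c. \<beta> = (\<lambda>s t. c * gform Bs s t)"
proof -
  let ?g = "gform Bs"
  have gb: "bilinear_form ?g" by (rule gform_bil[OF ind sp])
  have gs: "sym_form ?g" by (rule gform_sym)
  have gp: "pos_def ?g" by (rule gform_pos[OF fin ind sp])
  have gi: "\<And>A s t. A \<in> Ev p q \<Longrightarrow> ?g (\<rho> (cl_blade A) s) (\<rho> (cl_blade A) t) = ?g s t"
    by (rule gform_blade_inv[OF ind sp])
  define G where "G = Rz Bs ?g"
  define Bm where "Bm = Rz Bs \<beta>"
  have linG: "linear G" unfolding G_def by (rule Rz_linear[OF gb])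
  have linB: "linear Bm" unfolding Bm_def by (rule Rz_linear[OF bil])
  have gG: "\<And>s t. g0 Bs s (G t) = ?g s t" unfolding G_def by (rule Rz_riesz[OF fin ind sp gb])
  have bB: "\<And>s t. g0 Bs s (Bm t) = \<beta> s t" unfolding Bm_def by (rule Rz_riesz[OF fin ind sp bil])
  have nondeg: "\<And>d. (\<And>s. ?g s d = 0) \<Longrightarrow> d = 0"
  proof -
    fix d assume "\<And>s. ?g s d = 0"
    then have "?g d d = 0" by simp
    then show "d = 0" using gp unfolding pos_def_def by (metis less_irrefl)
  qed
  have injG: "inj G"
  proof (rule injI)
    fix a b assume "G a = G b"
    then have "G (a - b) = 0" using linG by (simp add: real_vector.linear_diff)
    then have "\<And>s. ?g s (a - b) = 0" using gG[symmetric] by (simp add: g0_def real_vector.representation_zero)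
    then show "a = b" using nondeg by fastforce
  qed
  have surjG: "surj G" by (rule lin_inj_surj[OF fin ind sp linG injG])
  define M where "M = (\<lambda>t. SOME u. G u = Bm t)"
  have GM: "G (M t) = Bm t" for t
  proof -
    have "\<exists>u. G u = Bm t" using surjG by (metis surjD)
    then show ?thesis unfolding M_def by (rule someI_ex)
  qed
  have linM: "linear M"
  proof (rule linearI)
    fix a b
    have "G (M (a + b)) = G (M a + M b)"
      using linG linB by (simp add: GM real_vector.linear_add)
    then show "M (a + b) = M a + M b" using injG by (simp add: inj_eq)
  next
    fix r a
    have "G (M (r *\<^sub>R a)) = G (r *\<^sub>R M a)"
      using linG linB by (simp add: GM real_vector.linear_scale)
    then show "M (r *\<^sub>R a) = r *\<^sub>R M a" using injG by (simp add: inj_eq)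
  qed
  have gM: "\<And>s t. ?g s (M t) = \<beta> s t" using gG GM bB by metis
  have adj: "\<And>s t. ?g (M s) t = ?g s (M t)"
  proof -
    fix s t
    have "?g (M s) t = ?g t (M s)" using gs unfolding sym_form_def by simp
    also have "\<dots> = \<beta> t s" by (rule gM)
    also have "\<dots> = \<beta> s t" using sy unfolding sym_form_def by simp
    also have "\<dots> = ?g s (M t)" by (rule gM[symmetric])
    finally show "?g (M s) t = ?g s (M t)" .
  qed
  have ne: "\<exists>w::'w. w \<noteq> 0" using irr unfolding irreducible_under_def by blast
  obtain c v where cv: "v \<noteq> 0" "M v = c *\<^sub>R v"
    using sym_eigen[OF fin sp ne linM gb gs gp adj] by blast
  have comm: "M (\<rho> (cl_blade A) t) = \<rho> (cl_blade A) (M t)" if A: "A \<in> Ev p q" for A t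
  proof -
    have linA: "linear (\<rho> (cl_blade A))" by (rule rho_lin[OF Ev_blade[OF A]])
    have "?g s (M (\<rho> (cl_blade A) t)) = ?g s (\<rho> (cl_blade A) (M t))" for s
    proof -
      define s' where "s' = tau p A *\<^sub>R \<rho> (cl_blade A) s"
      have ss: "\<rho> (cl_blade A) s' = s" unfolding s'_def by (rule rho_blade_inv[OF A])
      have "?g s (M (\<rho> (cl_blade A) t)) = \<beta> (\<rho> (cl_blade A) s') (\<rho> (cl_blade A) t)" by (simp add: gM ss)
      also have "\<dots> = \<beta> s' t" by (rule Khat_inv_blade[OF bil inv A])
      also have "\<dots> = ?g s' (M t)" by (rule gM[symmetric])
      also have "\<dots> = ?g (\<rho> (cl_blade A) s') (\<rho> (cl_blade A) (M t))" by (rule gi[OF A, symmetric])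
      finally show ?thesis unfolding ss .
    qed
    then have "\<And>s. ?g s (M (\<rho> (cl_blade A) t) - \<rho> (cl_blade A) (M t)) = 0"
      by (simp add: bil_diff_right[OF gb])
    then show ?thesis using nondeg by fastforce
  qed
  define K where "K = {t. M t = c *\<^sub>R t}"
  have subK: "subspace K" unfolding K_def subspace_def using linM
    by (auto simp: real_vector.linear_0 real_vector.linear_add real_vector.linear_scale scaleR_add_right)
  have invK: "\<forall>x\<in>cl_even p q. \<forall>u\<in>K. \<rho> x u \<in> K"
  proof (intro ballI, rule inv_even[OF subK])
    fix A u assume A: "A \<in> Ev p q" and u: "u \<in> K"
    have "M (\<rho> (cl_blade A) u) = \<rho> (cl_blade A) (c *\<^sub>R u)" using comm[OF A] u unfolding K_def by simp
    also have "\<dots> = c *\<^sub>R \<rho> (cl_blade A) u" using rho_lin[OF Ev_blade[OF A]] by (simp add: real_vector.linear_scale)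
    finally show "\<rho> (cl_blade A) u \<in> K" unfolding K_def by simp
  qed
  have "K \<noteq> {0}" using cv unfolding K_def by auto
  then have "K = UNIV" using irr subK invK unfolding irreducible_under_def by blast
  then have Mc: "\<And>t. M t = c *\<^sub>R t" unfolding K_def by auto
  have "\<beta> = (\<lambda>s t. c * ?g s t)"
  proof (intro ext)
    fix s t
    have "\<beta> s t = ?g s (M t)" by (rule gM[symmetric])
    also have "\<dots> = c * ?g s t" unfolding Mc by (rule bil_scale_right[OF gb])
    finally show "\<beta> s t = c * ?g s t" .
  qed
  then show ?thesis by blast
qed

end

definition eps :: "nat \<Rightarrow> nat \<Rightarrow> real" where
  "eps p k = (if k < p then 1 else -1)"

lemma eps_sq: "eps p k * eps p k = 1" by (simp add: eps_def)

lemma std_Vspace: "k < n \<Longrightarrow> std_basis k \<in> Vspace n"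
  unfolding Vspace_def std_basis_def by auto

lemma pq_inner_std: "k < p + q \<Longrightarrow> pq_inner p q (std_basis k) z = eps p k * z k"
proof -
  assume k: "k < p + q"
  show ?thesis
  proof (cases "k < p")
    case True
    have "(\<Sum>i<p. std_basis k i * z i) = z k" using True by (subst sum_single_gen[of _ k]) (auto simp: std_basis_def)
    moreover have "(\<Sum>i\<in>{p..<p+q}. std_basis k i * z i) = 0" using True by (intro sum.neutral) (auto simp: std_basis_def)
    ultimately show ?thesis using True by (simp add: pq_inner_def eps_def)
  next
    case False
    have "(\<Sum>i<p. std_basis k i * z i) = 0" using False by (intro sum.neutral) (auto simp: std_basis_def)
    moreover have "(\<Sum>i\<in>{p..<p+q}. std_basis k i * z i) = z k" using False k by (subst sum_single_gen[of _ k]) (auto simp: std_basis_def)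
    ultimately show ?thesis using False by (simp add: pq_inner_def eps_def)
  qed
qed

lemma so_act_V_std:
  assumes "i < p + q" "j < p + q"
  shows "so_act_V p q (std_basis i) (std_basis j) z k =
    eps p j * z j * (if k = i then 1 else 0) - eps p i * z i * (if k = j then 1 else 0)"
  unfolding so_act_V_def pq_inner_std[OF assms(1)] pq_inner_std[OF assms(2)] by (simp add: std_basis_def)

lemma tau_pair:
  assumes "i < j"
  shows "tau p {i, j} = - (eps p i * eps p j)"
proof -
  have "{(a, b). a \<in> {i, j} \<and> b \<in> {i, j} \<and> b < a} = {(j, i)}" using assms by auto
  then show ?thesis using assms unfolding tau_def blade_sign_def eps_def cl_sq_def by auto
qed

lemma prod_if_single:
  assumes "finite B"
  shows "(\<Prod>b\<in>B. if a = b then 1 else (-1::real)) = (-1) ^ card B * (if a \<in> B then -1 else 1)"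
proof (cases "a \<in> B")
  case True
  have "(\<Prod>b\<in>B. if a = b then 1 else (-1::real)) = (if a = a then 1 else -1) * (\<Prod>b\<in>B - {a}. if a = b then 1 else -1)"
    using assms True by (simp add: prod.remove)
  also have "(\<Prod>b\<in>B - {a}. if a = b then 1 else (-1::real)) = (\<Prod>b\<in>B - {a}. -1)"
    by (intro prod.cong refl) auto
  also have "\<dots> = (-1) ^ (card B - 1)" using assms True by simp
  finally have e: "(\<Prod>b\<in>B. if a = b then 1 else (-1::real)) = (-1) ^ (card B - 1)" by simp
  have "card B \<ge> 1" using assms True by (metis card_0_eq empty_iff less_one not_le)
  then have "(-1::real) ^ card B = - ((-1) ^ (card B - 1))"
    by (metis Suc_diff_1 less_le_trans power_Suc mult_minus1 zero_less_one)
  then show ?thesis using e True by simp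
next
  case False
  then have "(\<Prod>b\<in>B. if a = b then 1 else (-1::real)) = (\<Prod>b\<in>B. -1)" by (intro prod.cong refl) auto
  then show ?thesis using False by simp
qed

lemma comm_sign:
  assumes fA: "finite A" and fB: "finite B"
  shows "blade_sign p A B * blade_sign p B A = (-1) ^ (card A * card B) * (\<Prod>a\<in>A. if a \<in> B then -1 else 1)"
proof -
  have "invs A B * invs B A = (\<Prod>a\<in>A. \<Prod>b\<in>B. chi a b * chi b a)"
    unfolding invs_def by (simp add: prod.swap[of _ B A] prod.distrib)
  also have "\<dots> = (\<Prod>a\<in>A. \<Prod>b\<in>B. if a = b then 1 else -1)"
    by (intro prod.cong refl) (auto simp: chi_def)
  also have "\<dots> = (\<Prod>a\<in>A. (-1) ^ card B * (if a \<in> B then -1 else 1))"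
    by (intro prod.cong refl prod_if_single[OF fB])
  also have "\<dots> = (-1) ^ (card A * card B) * (\<Prod>a\<in>A. if a \<in> B then -1 else 1)"
    by (simp add: prod.distrib power_mult[symmetric] mult.commute)
  finally have i: "invs A B * invs B A = (-1) ^ (card A * card B) * (\<Prod>a\<in>A. if a \<in> B then -1 else 1)" .
  have q: "Qs p (A \<inter> B) * Qs p (B \<inter> A) = 1" by (simp add: Int_commute Qs_sq)
  have "blade_sign p A B * blade_sign p B A = (invs A B * invs B A) * (Qs p (A \<inter> B) * Qs p (B \<inter> A))"
    using fA fB by (simp add: blade_sign_eq ac_simps)
  then show ?thesis using i q by simp
qed

context cmod
begin

lemma so_act_W_std:
  assumes "i < j" "j < p + q"
  shows "so_act_W p q \<rho> (std_basis i) (std_basis j) = (\<lambda>w. (- 1/2) *\<^sub>R \<rho> (cl_blade {i, j}) w)"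
proof -
  have s: "{i} \<subseteq> {0..<p+q}" "{j} \<subseteq> {0..<p+q}" using assms by auto
  have e1: "cl_mult p q (cl_vec (std_basis i)) (cl_vec (std_basis j)) = (\<lambda>C. 1 * cl_blade {i, j} C)"
    unfolding cl_vec_std cl_blade_mult[OF s] using assms
    by (simp add: bs_single insert_commute Un_commute)
  have e2: "cl_mult p q (cl_vec (std_basis j)) (cl_vec (std_basis i)) = (\<lambda>C. - 1 * cl_blade {i, j} C)"
    unfolding cl_vec_std cl_blade_mult[OF s(2) s(1)] using assms
    by (auto simp: bs_single insert_commute)
  have arg: "(\<lambda>A. -(1/4) * (cl_mult p q (cl_vec (std_basis i)) (cl_vec (std_basis j)) A
       - cl_mult p q (cl_vec (std_basis j)) (cl_vec (std_basis i)) A)) = (\<lambda>A. (- 1/2) * cl_blade {i, j} A)"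
    unfolding e1 e2 by (rule ext) simp
  have ev: "cl_blade {i, j} \<in> cl_even p q" using assms by (intro blade_even) auto
  show ?thesis unfolding so_act_W_def arg by (rule rho_scale[OF ev])
qed

end

locale pmod = cmod p q \<rho> for p q :: nat and \<rho> :: "mv \<Rightarrow> 'w::real_vector \<Rightarrow> 'w" +
  fixes Pm :: "'w \<Rightarrow> 'w \<Rightarrow> nat \<Rightarrow> real"
  assumes w2: "wedge2_map p q Pm" and equi: "so_equivariant p q \<rho> Pm"
begin

lemma Pm_lin_r: "linear (\<lambda>t. Pm s t k)" using w2 unfolding wedge2_map_def by blast
lemma Pm_lin_l: "linear (\<lambda>s. Pm s t k)" using w2 unfolding wedge2_map_def by blast
lemma Pm_antisym: "Pm s t k = - Pm t s k"
proof -
  have "Pm s t = (\<lambda>i. - Pm t s i)" using w2 unfolding wedge2_map_def by blast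
  then show ?thesis by (rule fun_cong)
qed
lemma Pm_V: "k \<ge> p + q \<Longrightarrow> Pm s t k = 0"
proof -
  assume k: "k \<ge> p + q"
  have "Pm s t \<in> Vspace (p + q)" using w2 unfolding wedge2_map_def by blast
  then show ?thesis using k unfolding Vspace_def by blast
qed

lemma Pm_scale_l: "Pm (c *\<^sub>R s) t k = c * Pm s t k"
  using real_vector.linear_scale[OF Pm_lin_l[of t k], of c s] by simp
lemma Pm_scale_r: "Pm s (c *\<^sub>R t) k = c * Pm s t k"
  using real_vector.linear_scale[OF Pm_lin_r[of s k], of c t] by simp

lemma pair:
  assumes ij: "i < j" "j < p + q"
  shows "Pm (\<rho> (cl_blade {i, j}) s) (\<rho> (cl_blade {i, j}) t) k =
     eps p i * eps p j * (if k = i \<or> k = j then -1 else 1) * Pm s t k"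
proof -
  let ?R = "\<rho> (cl_blade {i, j})"
  let ?e = "eps p i * eps p j"
  have iv: "std_basis i \<in> Vspace (p+q)" "std_basis j \<in> Vspace (p+q)" using ij by (auto intro: std_Vspace)
  have A: "{i, j} \<in> Ev p q" using ij unfolding Ev_def by auto
  have Phi: "Pm (?R s) t k + Pm s (?R t) k = -2 * (eps p j * Pm s t j * (if k = i then 1 else 0) - eps p i * Pm s t i * (if k = j then 1 else 0))"
    for s t k
  proof -
    have "(\<lambda>k. Pm (so_act_W p q \<rho> (std_basis i) (std_basis j) s) t k + Pm s (so_act_W p q \<rho> (std_basis i) (std_basis j) t) k)
       = so_act_V p q (std_basis i) (std_basis j) (Pm s t)"
      using equi iv unfolding so_equivariant_def by blast
    then have "(\<lambda>k. Pm ((- 1/2) *\<^sub>R ?R s) t k + Pm s ((- 1/2) *\<^sub>R ?R t) k) = so_act_V p q (std_basis i) (std_basis j) (Pm s t)"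
      unfolding so_act_W_std[OF ij] .
    then have "Pm ((- 1/2) *\<^sub>R ?R s) t k + Pm s ((- 1/2) *\<^sub>R ?R t) k = so_act_V p q (std_basis i) (std_basis j) (Pm s t) k"
      by (rule fun_cong)
    then have "(- 1/2) * (Pm (?R s) t k + Pm s (?R t) k) = eps p j * Pm s t j * (if k = i then 1 else 0) - eps p i * Pm s t i * (if k = j then 1 else 0)"
      unfolding Pm_scale_l Pm_scale_r so_act_V_std[OF less_trans[OF ij] ij(2)] by (simp add: algebra_simps)
    then show ?thesis by (simp add: algebra_simps)
  qed
  have RR: "?R (?R w) = (- ?e) *\<^sub>R w" for w
  proof -
    have "?R (?R w) = blade_sign p {i, j} {i, j} *\<^sub>R \<rho> (cl_blade (sd {i,j} {i,j})) w" by (rule rho_blade_mult[OF A A])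
    also have "\<dots> = tau p {i, j} *\<^sub>R w" by (simp add: tau_def cl_one_blade[symmetric] rho_one)
    finally show ?thesis using tau_pair[OF ij(1)] by simp
  qed
  have e1: "Pm (?R (?R s)) t k + Pm (?R s) (?R t) k = -2 * (eps p j * Pm (?R s) t j * (if k = i then 1 else 0) - eps p i * Pm (?R s) t i * (if k = j then 1 else 0))"
    by (rule Phi)
  have e2: "Pm (?R s) (?R t) k + Pm s (?R (?R t)) k = -2 * (eps p j * Pm s (?R t) j * (if k = i then 1 else 0) - eps p i * Pm s (?R t) i * (if k = j then 1 else 0))"
    by (rule Phi)
  have pj: "Pm (?R s) t j + Pm s (?R t) j = 2 * eps p i * Pm s t i" using Phi[of s t j] ij by simp
  have pi: "Pm (?R s) t i + Pm s (?R t) i = -2 * eps p j * Pm s t j" using Phi[of s t i] ij by simp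
  have "2 * Pm (?R s) (?R t) k = -2 * (eps p j * (Pm (?R s) t j + Pm s (?R t) j) * (if k = i then 1 else 0)
       - eps p i * (Pm (?R s) t i + Pm s (?R t) i) * (if k = j then 1 else 0)) + 2 * ?e * Pm s t k"
    using e1 e2 unfolding RR Pm_scale_l Pm_scale_r by (simp add: algebra_simps)
  also have "\<dots> = -2 * (eps p j * (2 * eps p i * Pm s t i) * (if k = i then 1 else 0)
       - eps p i * (-2 * eps p j * Pm s t j) * (if k = j then 1 else 0)) + 2 * ?e * Pm s t k"
    unfolding pj pi ..
  finally have "2 * Pm (?R s) (?R t) k = -2 * (eps p j * (2 * eps p i * Pm s t i) * (if k = i then 1 else 0)
       - eps p i * (-2 * eps p j * Pm s t j) * (if k = j then 1 else 0)) + 2 * ?e * Pm s t k" .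
  then have H: "Pm (?R s) (?R t) k = -(eps p j * (2 * eps p i * Pm s t i) * (if k = i then 1 else 0)
       - eps p i * (-2 * eps p j * Pm s t j) * (if k = j then 1 else 0)) + ?e * Pm s t k"
  proof -
    let ?X = "Pm (?R s) (?R t) k"
    let ?Y = "-(eps p j * (2 * eps p i * Pm s t i) * (if k = i then 1 else 0)
       - eps p i * (-2 * eps p j * Pm s t j) * (if k = j then 1 else 0)) + ?e * Pm s t k"
    assume h: "2 * ?X = -2 * (eps p j * (2 * eps p i * Pm s t i) * (if k = i then 1 else 0)
       - eps p i * (-2 * eps p j * Pm s t j) * (if k = j then 1 else 0)) + 2 * ?e * Pm s t k"
    have "2 * ?X = 2 * ?Y" unfolding h by (simp only: distrib_left mult_minus_right mult_minus_left mult.assoc)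
    then show "?X = ?Y" by simp
  qed
  show ?thesis
  proof (cases "k = i")
    case True
    then show ?thesis using H ij by (simp add: algebra_simps)
  next
    case F: False
    show ?thesis
    proof (cases "k = j")
      case True
      then show ?thesis using H ij F by (simp add: algebra_simps)
    next
      case False
      then show ?thesis using H F by simp
    qed
  qed
qed

lemma blade_split:
  assumes A: "A \<in> Ev p q" "A \<noteq> {}"
  obtains a1 a2 R where "a1 < a2" "a2 < p + q" "R \<in> Ev p q" "A = insert a1 (insert a2 R)"
    "a1 \<notin> R" "a2 \<notin> R" "card R < card A" "\<And>w. \<rho> (cl_blade A) w = \<rho> (cl_blade {a1, a2}) (\<rho> (cl_blade R) w)"
proof -
  have fA: "finite A" and sA: "A \<subseteq> {0..<p+q}" and eA: "even (card A)" using A by (auto simp: Ev_def intro: finite_subset)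
  define a1 where "a1 = Min A"
  have a1A: "a1 \<in> A" unfolding a1_def using fA A(2) by simp
  define A' where "A' = A - {a1}"
  have cA': "card A' = card A - 1" unfolding A'_def using a1A fA by simp
  have "card A \<noteq> 0" using fA A(2) by simp
  then have "card A \<ge> 2" using eA by presburger
  then have "A' \<noteq> {}" using cA' by auto
  define a2 where "a2 = Min A'"
  have fA': "finite A'" unfolding A'_def using fA by simp
  have a2A': "a2 \<in> A'" unfolding a2_def using fA' \<open>A' \<noteq> {}\<close> by simp
  define R where "R = A' - {a2}"
  have a12: "a1 < a2"
  proof -
    have "a1 \<le> a2" unfolding a1_def using fA a2A' A'_def by simp
    moreover have "a1 \<noteq> a2" using a2A' unfolding A'_def by auto
    ultimately show ?thesis by simp
  qed
  have Rgt: "\<And>r. r \<in> R \<Longrightarrow> a2 < r"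
  proof -
    fix r assume r: "r \<in> R"
    then have "a2 \<le> r" unfolding a2_def R_def using fA' by simp
    moreover have "r \<noteq> a2" using r unfolding R_def by auto
    ultimately show "a2 < r" by simp
  qed
  have Aeq: "A = insert a1 (insert a2 R)" unfolding R_def A'_def using a1A a2A' A'_def by auto
  have a1R: "a1 \<notin> R" "a2 \<notin> R" unfolding R_def A'_def by auto
  have fR: "finite R" unfolding R_def using fA' by simp
  have cR: "card A = Suc (Suc (card R))" using Aeq a1R a12 fR by simp
  have REv: "R \<in> Ev p q" using sA eA cR unfolding Ev_def Aeq by auto
  have a2n: "a2 < p + q" using sA Aeq by auto
  have PEv: "{a1, a2} \<in> Ev p q" using sA Aeq a12 unfolding Ev_def by auto
  have bs: "blade_sign p {a1, a2} R = 1"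
  proof -
    have "invs {a1, a2} R = 1" using Rgt a12 by (intro invs_one) (auto simp: less_imp_le less_trans)
    moreover have "{a1, a2} \<inter> R = {}" using a1R by auto
    ultimately show ?thesis using fR by (simp add: blade_sign_eq Qs_def)
  qed
  have sdA: "sd {a1, a2} R = A" using Aeq a1R by auto
  have rw: "\<rho> (cl_blade A) w = \<rho> (cl_blade {a1, a2}) (\<rho> (cl_blade R) w)" for w
    using rho_blade_mult[OF PEv REv, of w] unfolding bs sdA by simp
  show ?thesis using that[OF a12 a2n REv Aeq a1R _ rw] cR by simp
qed

lemma blade_Pm:
  assumes "A \<in> Ev p q"
  shows "Pm (\<rho> (cl_blade A) s) (\<rho> (cl_blade A) t) k = (\<Prod>a\<in>A. eps p a) * (if k \<in> A then -1 else 1) * Pm s t k"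
  using assms
proof (induction "card A" arbitrary: A s t rule: less_induct)
  case less
  show ?case
  proof (cases "A = {}")
    case True
    then show ?thesis by (simp add: cl_one_blade[symmetric] rho_one)
  next
    case False
    obtain a1 a2 R where sp: "a1 < a2" "a2 < p + q" "R \<in> Ev p q" "A = insert a1 (insert a2 R)"
      "a1 \<notin> R" "a2 \<notin> R" "card R < card A" "\<And>w. \<rho> (cl_blade A) w = \<rho> (cl_blade {a1, a2}) (\<rho> (cl_blade R) w)"
      using blade_split[OF less.prems False] by blast
    have fR: "finite R" using sp(3) by (auto simp: Ev_def intro: finite_subset)
    have "Pm (\<rho> (cl_blade A) s) (\<rho> (cl_blade A) t) k =
        eps p a1 * eps p a2 * (if k = a1 \<or> k = a2 then -1 else 1) * Pm (\<rho> (cl_blade R) s) (\<rho> (cl_blade R) t) k"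
      unfolding sp(8) by (rule pair[OF sp(1,2)])
    also have "\<dots> = eps p a1 * eps p a2 * (if k = a1 \<or> k = a2 then -1 else 1) *
        ((\<Prod>a\<in>R. eps p a) * (if k \<in> R then -1 else 1) * Pm s t k)"
      using less.hyps[OF sp(7) sp(3)] by simp
    also have "\<dots> = (\<Prod>a\<in>A. eps p a) * (if k \<in> A then -1 else 1) * Pm s t k"
    proof -
      have "(\<Prod>a\<in>A. eps p a) = eps p a1 * (eps p a2 * (\<Prod>a\<in>R. eps p a))"
        unfolding sp(4) using sp(1,5,6) fR by simp
      moreover have "(if k \<in> A then -1 else (1::real)) = (if k = a1 \<or> k = a2 then -1 else 1) * (if k \<in> R then -1 else 1)"
        unfolding sp(4) using sp(5,6) by auto
      ultimately show ?thesis by (simp add: ac_simps)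
    qed
    finally show ?thesis .
  qed
qed

definition Om :: "nat set" where "Om = {1..<p}"

lemma oddp: "odd p" using p3 by presburger

lemma Om_Ev: "Om \<in> Ev p q"
  unfolding Om_def Ev_def using oddp by auto

lemma b_eq: "b_form p q \<rho> Pm s t = Pm (\<rho> (cl_blade Om) s) t 0"
proof -
  have "0 < p" using oddp by (cases p) auto
  then show ?thesis unfolding b_form_def Om_def by (simp add: pq_inner_std eps_def)
qed

lemma tau_Om: "tau p Om = -1"
proof -
  have sh: "Om = (+) 1 ` {0..<p-1}" unfolding Om_def using oddp
    using image_add_atLeastLessThan[of 1 0 "p-1"] by (simp add: add.commute)
  have i: "invs Om Om = sg2 (p - 1)" unfolding sh invs_shift invs_Omega ..
  have s: "sg2 (p - 1) = -1"
  proof -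
    obtain k where k: "p = 4 * k + 3" using p3 by (metis div_mult_mod_eq add.commute mult.commute)
    have "(p - 1) * (p - 1 - 1) = 2 * ((2 * k + 1) * (4 * k + 1))" using k by (simp add: algebra_simps)
    then have "(p - 1) * (p - 1 - 1) div 2 = (2 * k + 1) * (4 * k + 1)" by simp
    moreover have "odd ((2 * k + 1) * (4 * k + 1))" by simp
    ultimately show ?thesis unfolding sg2_def by (simp add: m1pow)
  qed
  have q: "Qs p Om = 1"
  proof -
    have "Qs p Om = (\<Prod>i\<in>Om. -1)" unfolding Qs_def Om_def by (intro prod.cong refl) (auto simp: cl_sq_def)
    also have "\<dots> = (-1) ^ (p - 1)" unfolding Om_def by simp
    also have "\<dots> = 1" using oddp by (simp add: m1pow)
    finally show ?thesis .
  qed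
  have "finite Om" unfolding Om_def by simp
  then show ?thesis unfolding tau_def using i s q by (simp add: blade_sign_eq)
qed

lemma b_bil: "bilinear_form (b_form p q \<rho> Pm)"
  unfolding bilinear_form_def b_eq
proof (intro conjI allI)
  fix s show "linear (\<lambda>t. Pm (\<rho> (cl_blade Om) s) t 0)" by (rule Pm_lin_r)
next
  fix t
  have "linear ((\<lambda>x. Pm x t 0) \<circ> \<rho> (cl_blade Om))"
    by (rule linear_compose[OF rho_lin[OF Ev_blade[OF Om_Ev]] Pm_lin_l])
  then show "linear (\<lambda>s. Pm (\<rho> (cl_blade Om) s) t 0)" by (simp add: comp_def)
qed

lemma b_blade_inv:
  assumes A: "A \<in> Ev p q"
  shows "b_form p q \<rho> Pm (\<rho> (cl_blade A) s) (\<rho> (cl_blade A) t) = b_form p q \<rho> Pm s t"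
proof -
  have fA: "finite A" and sA: "A \<subseteq> {0..<p+q}" and eA: "even (card A)" using A by (auto simp: Ev_def intro: finite_subset)
  have fO: "finite Om" and eO: "even (card Om)" using Om_Ev by (auto simp: Ev_def intro: finite_subset)
  let ?cc = "blade_sign p Om A * blade_sign p A Om"
  have comm: "\<rho> (cl_blade Om) (\<rho> (cl_blade A) w) = ?cc *\<^sub>R \<rho> (cl_blade A) (\<rho> (cl_blade Om) w)" for w
  proof -
    have "\<rho> (cl_blade Om) (\<rho> (cl_blade A) w) = blade_sign p Om A *\<^sub>R \<rho> (cl_blade (sd Om A)) w"
      by (rule rho_blade_mult[OF Om_Ev A])
    moreover have "\<rho> (cl_blade A) (\<rho> (cl_blade Om) w) = blade_sign p A Om *\<^sub>R \<rho> (cl_blade (sd A Om)) w"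
      by (rule rho_blade_mult[OF A Om_Ev])
    moreover have "sd A Om = sd Om A" by auto
    moreover have "blade_sign p A Om * blade_sign p A Om = 1" by (rule blade_sign_sq[OF fA fO])
    ultimately show ?thesis by (simp add: mult.assoc)
  qed
  have cc: "?cc = (\<Prod>a\<in>A. if a \<in> Om then -1 else 1)"
  proof -
    have "?cc = blade_sign p A Om * blade_sign p Om A" by (simp add: mult.commute)
    also have "\<dots> = (-1) ^ (card A * card Om) * (\<Prod>a\<in>A. if a \<in> Om then -1 else 1)" by (rule comm_sign[OF fA fO])
    finally show ?thesis using eA by (simp add: m1pow)
  qed
  have z: "(if (0::nat) \<in> A then -1 else (1::real)) = (\<Prod>a\<in>A. if a = 0 then -1 else 1)"
  proof (cases "0 \<in> A")
    case True
    have "(\<Prod>a\<in>A. if a = 0 then -1 else (1::real)) = (if (0::nat) = 0 then -1 else 1) * (\<Prod>a\<in>A - {0}. if a = 0 then -1 else 1)"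
      using fA True by (simp add: prod.remove)
    also have "(\<Prod>a\<in>A - {0}. if a = 0 then -1 else (1::real)) = 1" by (intro prod.neutral) auto
    finally show ?thesis using True by simp
  next
    case False
    have "(\<Prod>a\<in>A. if a = 0 then -1 else (1::real)) = 1"
    proof (intro prod.neutral ballI)
      fix a assume "a \<in> A"
      then have "a \<noteq> 0" using False by metis
      then show "(if a = 0 then -1 else (1::real)) = 1" by simp
    qed
    then show ?thesis using False by simp
  qed
  have tot: "?cc * (\<Prod>a\<in>A. eps p a) * (if 0 \<in> A then -1 else 1) = 1"
  proof -
    have "?cc * (\<Prod>a\<in>A. eps p a) * (if 0 \<in> A then -1 else 1) =
        (\<Prod>a\<in>A. (if a \<in> Om then -1 else 1) * eps p a * (if a = 0 then -1 else 1))"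
      unfolding cc z by (simp add: prod.distrib)
    also have "\<dots> = (\<Prod>a\<in>A. -1)"
    proof (intro prod.cong refl)
      fix a assume "a \<in> A"
      then show "(if a \<in> Om then -1 else 1) * eps p a * (if a = 0 then -1 else 1) = (-1::real)"
        using oddp unfolding Om_def eps_def by (cases "p = 0") auto
    qed
    also have "\<dots> = 1" using eA by (simp add: m1pow)
    finally show ?thesis .
  qed
  have "b_form p q \<rho> Pm (\<rho> (cl_blade A) s) (\<rho> (cl_blade A) t) = Pm (?cc *\<^sub>R \<rho> (cl_blade A) (\<rho> (cl_blade Om) s)) (\<rho> (cl_blade A) t) 0"
    unfolding b_eq comm ..
  also have "\<dots> = ?cc * ((\<Prod>a\<in>A. eps p a) * (if 0 \<in> A then -1 else 1) * Pm (\<rho> (cl_blade Om) s) t 0)"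
    unfolding Pm_scale_l blade_Pm[OF A] ..
  also have "\<dots> = Pm (\<rho> (cl_blade Om) s) t 0" using tot by (simp add: mult.assoc[symmetric])
  finally show ?thesis unfolding b_eq .
qed

lemma b_sym: "sym_form (b_form p q \<rho> Pm)"
  unfolding sym_form_def
proof (intro allI)
  fix s t
  have "b_form p q \<rho> Pm s t = b_form p q \<rho> Pm (\<rho> (cl_blade Om) s) (\<rho> (cl_blade Om) t)"
    by (rule b_blade_inv[OF Om_Ev, symmetric])
  also have "\<dots> = Pm (\<rho> (cl_blade Om) (\<rho> (cl_blade Om) s)) (\<rho> (cl_blade Om) t) 0" by (rule b_eq)
  also have "\<rho> (cl_blade Om) (\<rho> (cl_blade Om) s) = tau p Om *\<^sub>R s"
    using rho_blade_mult[OF Om_Ev Om_Ev, of s] by (simp add: tau_def cl_one_blade[symmetric] rho_one)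
  also have "Pm (tau p Om *\<^sub>R s) (\<rho> (cl_blade Om) t) 0 = - Pm s (\<rho> (cl_blade Om) t) 0"
    unfolding Pm_scale_l tau_Om by simp
  also have "\<dots> = Pm (\<rho> (cl_blade Om) t) s 0" using Pm_antisym[of "\<rho> (cl_blade Om) t" s 0] by simp
  also have "\<dots> = b_form p q \<rho> Pm t s" by (rule b_eq[symmetric])
  finally show "b_form p q \<rho> Pm s t = b_form p q \<rho> Pm t s" .
qed

lemma b_Khat: "invariant_form (Khat p q) \<rho> (b_form p q \<rho> Pm)"
  by (rule blade_inv_Khat[OF b_bil]) (rule b_blade_inv)

lemma b_zero_Pm:
  assumes "\<And>s t. b_form p q \<rho> Pm s t = 0"
  shows "Pm = (\<lambda>s t i. 0)"
proof -
  have z0: "Pm s t 0 = 0" for s t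
  proof -
    define s' where "s' = tau p Om *\<^sub>R \<rho> (cl_blade Om) s"
    have "\<rho> (cl_blade Om) s' = s" unfolding s'_def by (rule rho_blade_inv[OF Om_Ev])
    then have "Pm s t 0 = b_form p q \<rho> Pm s' t" by (simp add: b_eq)
    then show ?thesis using assms by simp
  qed
  have zk: "Pm s t k = 0" for s t k
  proof (cases "k < p + q")
    case False then show ?thesis by (simp add: Pm_V)
  next
    case True
    show ?thesis
    proof (cases "k = 0")
      case True then show ?thesis using z0 by simp
    next
      case False
      have p0: "0 < p + q" using True by arith
      have iv: "std_basis 0 \<in> Vspace (p+q)" "std_basis k \<in> Vspace (p+q)" using True p0 by (auto intro: std_Vspace)
      let ?X = "so_act_W p q \<rho> (std_basis 0) (std_basis k)"
      have "(\<lambda>i. Pm (?X s) t i + Pm s (?X t) i) = so_act_V p q (std_basis 0) (std_basis k) (Pm s t)"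
        using equi iv unfolding so_equivariant_def by blast
      then have "Pm (?X s) t 0 + Pm s (?X t) 0 = so_act_V p q (std_basis 0) (std_basis k) (Pm s t) 0"
        by (rule fun_cong)
      then have "0 = eps p k * Pm s t k" using z0 False unfolding so_act_V_std[OF p0 True] by simp
      moreover have "eps p k \<noteq> 0" by (simp add: eps_def)
      ultimately show ?thesis by simp
    qed
  qed
  then show ?thesis by (intro ext) simp
qed

end

theorem mainTheorem8:
  fixes p q :: nat and \<rho> :: "mv \<Rightarrow> 'w::real_vector \<Rightarrow> 'w"
  assumes "p mod 4 = 3"
    and "cl0_module p q \<rho>"
  shows "(irreducible_under (cl_even p q) \<rho> \<longleftrightarrow> irreducible_under (Khat p q) \<rho>)
    \<and> (irreducible_under (cl_even p q) \<rho> \<longrightarrow>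
         (\<exists>g. bilinear_form g \<and> sym_form g \<and> invariant_form (Khat p q) \<rho> g \<and> pos_def g \<and>
              (\<forall>\<beta>. bilinear_form \<beta> \<and> sym_form \<beta> \<and> invariant_form (Khat p q) \<rho> \<beta> \<longrightarrow>
                    (\<exists>c::real. \<beta> = (\<lambda>s t. c * g s t)))))
    \<and> (\<forall>Pm. irreducible_under (cl_even p q) \<rho> \<and> wedge2_map p q Pm \<and> so_equivariant p q \<rho> Pm \<longrightarrow>
         Pm = (\<lambda>s t i. 0) \<or>
         (bilinear_form (b_form p q \<rho> Pm) \<and> sym_form (b_form p q \<rho> Pm) \<and>
          invariant_form (Khat p q) \<rho> (b_form p q \<rho> Pm) \<and>
          (pos_def (b_form p q \<rho> Pm) \<or> neg_def (b_form p q \<rho> Pm))))"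
proof -
  interpret cm: cmod p q \<rho> by unfold_locales (rule assms(2), rule assms(1))
  have P1: "irreducible_under (cl_even p q) \<rho> \<longleftrightarrow> irreducible_under (Khat p q) \<rho>" by (rule cm.part1)
  have P2: "irreducible_under (cl_even p q) \<rho> \<longrightarrow>
         (\<exists>g. bilinear_form g \<and> sym_form g \<and> invariant_form (Khat p q) \<rho> g \<and> pos_def g \<and>
              (\<forall>\<beta>. bilinear_form \<beta> \<and> sym_form \<beta> \<and> invariant_form (Khat p q) \<rho> \<beta> \<longrightarrow>
                    (\<exists>c::real. \<beta> = (\<lambda>s t. c * g s t))))"
  proof
    assume irr: "irreducible_under (cl_even p q) \<rho>"
    obtain Bs where Bs: "finite Bs" "independent Bs" "span Bs = UNIV"
      "bilinear_form (cm.gform Bs)" "sym_form (cm.gform Bs)" "invariant_form (Khat p q) \<rho> (cm.gform Bs)" "pos_def (cm.gform Bs)"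
      using cm.exists_g[OF irr] by blast
    have "\<forall>\<beta>. bilinear_form \<beta> \<and> sym_form \<beta> \<and> invariant_form (Khat p q) \<rho> \<beta> \<longrightarrow>
                    (\<exists>c::real. \<beta> = (\<lambda>s t. c * cm.gform Bs s t))"
      using cm.uniq[OF irr Bs(1,2,3)] by blast
    then show "\<exists>g. bilinear_form g \<and> sym_form g \<and> invariant_form (Khat p q) \<rho> g \<and> pos_def g \<and>
              (\<forall>\<beta>. bilinear_form \<beta> \<and> sym_form \<beta> \<and> invariant_form (Khat p q) \<rho> \<beta> \<longrightarrow>
                    (\<exists>c::real. \<beta> = (\<lambda>s t. c * g s t)))"
      using Bs(4-7) by blast
  qed
  have P3: "\<forall>Pm. irreducible_under (cl_even p q) \<rho> \<and> wedge2_map p q Pm \<and> so_equivariant p q \<rho> Pm \<longrightarrow>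
         Pm = (\<lambda>s t i. 0) \<or>
         (bilinear_form (b_form p q \<rho> Pm) \<and> sym_form (b_form p q \<rho> Pm) \<and>
          invariant_form (Khat p q) \<rho> (b_form p q \<rho> Pm) \<and>
          (pos_def (b_form p q \<rho> Pm) \<or> neg_def (b_form p q \<rho> Pm)))"
  proof (intro allI impI)
    fix Pm assume h: "irreducible_under (cl_even p q) \<rho> \<and> wedge2_map p q Pm \<and> so_equivariant p q \<rho> Pm"
    then have irr: "irreducible_under (cl_even p q) \<rho>" by blast
    interpret pm: pmod p q \<rho> Pm by unfold_locales (use h in blast)+
    obtain Bs where Bs: "finite Bs" "independent Bs" "span Bs = UNIV"
      "bilinear_form (cm.gform Bs)" "sym_form (cm.gform Bs)" "invariant_form (Khat p q) \<rho> (cm.gform Bs)" "pos_def (cm.gform Bs)"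
      using cm.exists_g[OF irr] by blast
    let ?b = "b_form p q \<rho> Pm"
    obtain c where c: "?b = (\<lambda>s t. c * cm.gform Bs s t)"
      using cm.uniq[OF irr Bs(1,2,3) pm.b_bil pm.b_sym pm.b_Khat] by blast
    show "Pm = (\<lambda>s t i. 0) \<or>
         (bilinear_form ?b \<and> sym_form ?b \<and> invariant_form (Khat p q) \<rho> ?b \<and> (pos_def ?b \<or> neg_def ?b))"
    proof (cases "c = 0")
      case True
      then have "\<And>s t. ?b s t = 0" using c by simp
      then show ?thesis using pm.b_zero_Pm by blast
    next
      case False
      have "pos_def ?b \<or> neg_def ?b"
      proof (cases "c > 0")
        case True
        then have "pos_def ?b" using Bs(7) unfolding pos_def_def c by simp
        then show ?thesis by blast
      next
        case F2: False
        then have "c < 0" using False by simp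
        then have "neg_def ?b" using Bs(7) unfolding pos_def_def neg_def_def c by (simp add: mult_neg_pos)
        then show ?thesis by blast
      qed
      then show ?thesis using pm.b_bil pm.b_sym pm.b_Khat by blast
    qed
  qed
  show ?thesis using P1 P2 P3 by blast
qed

end
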